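(* Let $S=S(\lambda_1,\ldots,\lambda_d)$ be a spider with $n=1+\lambda_1+\cdots+\lambda_d$ vertices and $\lambda_1\ge\cdots\ge\lambda_d$. Fix an index $i$ with $2\le i<d$ and a positive integer $m$. Let $a=\lceil(\lambda_i+1)/m\rceil$, write $n=qa+r$ with $0\le r<a$ (so $q=\lfloor n/a\rfloor$), write $r=qd'+r'$ with $0\le r'<q$, and let $t=\lambda_{i+1}+\cdots+\lambda_d$. If $t>2m-1$, $a>\lambda_{i+1}$, and $q>\frac{m(a-1)}{t-2m+1}$, then $S$ has no connected partition of type $((a+d'+1)^{r'},(a+d')^{q-r'})$, and consequently $S$ is not $e$-positive.
   Context: A spider $S(\lambda_1,\ldots,\lambda_d)$, for positive integers $\lambda_1\ge\cdots\ge\lambda_d$, is the tree consisting of a vertex $v$ (the center) together with $d$ vertex-disjoint paths (legs) having $\lambda_1,\ldots,\lambda_d$ vertices respectively, where $v$ is joined by an edge to one endpoint of each leg; it has $1+\lambda_1+\cdots+\lambda_d$ vertices. A connected partition of a graph $G=(V,E)$ is a partition of $V$ into blocks each inducing a connected subgraph; its type is the integer partition of $|V|$ formed by the block sizes. $(b^{x},c^{y})$ denotes the partition with $x$ parts equal to $b$ and $y$ parts equal to $c$. The chromatic symmetric function of a graph $G$ is $X_G=\sum_\kappa \prod_{v} x_{\kappa(v)}$ over proper colorings $\kappa$; $G$ is $e$-positive if $X_G$ is a nonnegative linear combination of elementary symmetric functions $e_\lambda$. *)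

theory Defs
  imports Complex_Main "HOL-Library.Multiset" "HOL-Library.FuncSet"
begin

definition connected_on :: "('a \<Rightarrow> 'a \<Rightarrow> bool) \<Rightarrow> 'a set \<Rightarrow> bool" where
  "connected_on E S \<longleftrightarrow> S \<noteq> {} \<and>
     (\<forall>u\<in>S. \<forall>v\<in>S. (\<lambda>x y. x \<in> S \<and> y \<in> S \<and> E x y)\<^sup>*\<^sup>* u v)"

definition connected_partition :: "'a set \<Rightarrow> ('a \<Rightarrow> 'a \<Rightarrow> bool) \<Rightarrow> 'a set set \<Rightarrow> bool" where
  "connected_partition V E P \<longleftrightarrow>
     \<Union>P = V \<and> (\<forall>B\<in>P. B \<noteq> {}) \<and>
     (\<forall>B\<in>P. \<forall>C\<in>P. B \<noteq> C \<longrightarrow> B \<inter> C = {}) \<and>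
     (\<forall>B\<in>P. connected_on E B)"

definition partition_type :: "'a set set \<Rightarrow> nat multiset" where
  "partition_type P = image_mset card (mset_set P)"

text \<open>Spider S(lam 1, ..., lam d): center (0,0), leg k has vertices (k,1),...,(k,lam k),
  center adjacent to (k,1), and (k,j) adjacent to (k,j+1).\<close>
definition spider_V :: "(nat \<Rightarrow> nat) \<Rightarrow> nat \<Rightarrow> (nat \<times> nat) set" where
  "spider_V lam d = {(0,0)} \<union> {(k,j). 1 \<le> k \<and> k \<le> d \<and> 1 \<le> j \<and> j \<le> lam k}"

definition spider_E :: "(nat \<Rightarrow> nat) \<Rightarrow> nat \<Rightarrow> nat \<times> nat \<Rightarrow> nat \<times> nat \<Rightarrow> bool" where
  "spider_E lam d u v \<longleftrightarrow> u \<in> spider_V lam d \<and> v \<in> spider_V lam d \<and>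
     ((u = (0,0) \<and> fst v \<ge> 1 \<and> snd v = 1) \<or>
      (v = (0,0) \<and> fst u \<ge> 1 \<and> snd u = 1) \<or>
      (fst u \<ge> 1 \<and> fst u = fst v \<and> (snd v = snd u + 1 \<or> snd u = snd v + 1)))"

text \<open>Chromatic symmetric function, restricted to N = |V| variables x_0..x_{N-1}
  (enough to determine the e-expansion of a degree-N symmetric function).
  Coefficient of the monomial x^alpha: number of proper colourings with colour
  class sizes alpha.\<close>
definition proper_colouring :: "'a set \<Rightarrow> ('a \<Rightarrow> 'a \<Rightarrow> bool) \<Rightarrow> ('a \<Rightarrow> nat) \<Rightarrow> bool" where
  "proper_colouring V E \<kappa> \<longleftrightarrow> (\<forall>u\<in>V. \<forall>v\<in>V. E u v \<longrightarrow> \<kappa> u \<noteq> \<kappa> v)"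

definition X_coeff :: "'a set \<Rightarrow> ('a \<Rightarrow> 'a \<Rightarrow> bool) \<Rightarrow> (nat \<Rightarrow> nat) \<Rightarrow> nat" where
  "X_coeff V E \<alpha> = card {\<kappa> \<in> V \<rightarrow>\<^sub>E {..<card V}. proper_colouring V E \<kappa> \<and>
      (\<forall>j<card V. card {v\<in>V. \<kappa> v = j} = \<alpha> j)}"

definition int_partitions :: "nat \<Rightarrow> nat list set" where
  "int_partitions N = {\<mu>. sorted \<mu> \<and> (\<forall>p\<in>set \<mu>. p > 0) \<and> sum_list \<mu> = N}"

text \<open>Coefficient of x^alpha in e_mu = prod_k e_{mu_k} in N variables: number of ways to
  choose for each k a subset S k of the variables of size mu_k such that variable j is
  chosen alpha j times.\<close>
definition e_coeff :: "nat \<Rightarrow> nat list \<Rightarrow> (nat \<Rightarrow> nat) \<Rightarrow> nat" where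
  "e_coeff N \<mu> \<alpha> = card {S :: nat \<Rightarrow> nat set.
      (\<forall>k<length \<mu>. S k \<subseteq> {..<N} \<and> card (S k) = \<mu> ! k) \<and>
      (\<forall>k\<ge>length \<mu>. S k = {}) \<and>
      (\<forall>j<N. card {k. k < length \<mu> \<and> j \<in> S k} = \<alpha> j)}"

definition e_positive :: "'a set \<Rightarrow> ('a \<Rightarrow> 'a \<Rightarrow> bool) \<Rightarrow> bool" where
  "e_positive V E \<longleftrightarrow> (\<exists>c :: nat list \<Rightarrow> real.
     (\<forall>\<mu>\<in>int_partitions (card V). c \<mu> \<ge> 0) \<and>
     (\<forall>\<alpha>. (\<forall>j\<ge>card V. \<alpha> j = 0) \<longrightarrow>
        real (X_coeff V E \<alpha>) = (\<Sum>\<mu>\<in>int_partitions (card V). c \<mu> * real (e_coeff (card V) \<mu> \<alpha>))))"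

end

theory Submission
  imports Defs "HOL-Library.Real_Mod"
begin


definition zeta :: "nat \<Rightarrow> complex" where "zeta l = cis (2*pi / real l)"

lemma zeta_pow: "zeta l ^ m = cis (2*pi*real m / real l)"
  by (simp add: zeta_def DeMoivre mult.commute)

lemma zeta_pow_l: "l > 0 \<Longrightarrow> zeta l ^ l = 1"
  by (simp add: zeta_pow)

lemma zeta_pow_mod: assumes "l > 0" shows "zeta l ^ (m mod l) = zeta l ^ m"
proof -
  have "zeta l ^ m = zeta l ^ (l * (m div l) + m mod l)" by simp
  also have "\<dots> = (zeta l ^ l) ^ (m div l) * zeta l ^ (m mod l)"
    by (simp only: power_add power_mult)
  finally show ?thesis using zeta_pow_l[OF assms] by simp
qed

lemma zeta_pow_ne1: assumes "l > 0" "\<not> l dvd m" shows "zeta l ^ m \<noteq> 1"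
proof
  assume "zeta l ^ m = 1"
  then obtain n where n: "2*pi*real m / real l = of_int n * (2*pi)"
    by (auto simp: zeta_pow cis_eq_1_iff)
  hence "real m = of_int n * real l" using assms(1) by (simp add: field_simps)
  hence "int m = n * int l" by (metis of_int_eq_iff of_int_mult of_int_of_nat_eq)
  hence "int l dvd int m" by simp
  thus False using assms(2) by simp
qed

lemma zeta_nz: "zeta l ^ m \<noteq> 0"
  by (simp add: zeta_def)

lemma sum_rot_zero:
  fixes w :: "'a \<Rightarrow> complex"
  assumes "finite S" "\<sigma> ` S \<subseteq> S" "inj_on \<sigma> S" "\<And>x. x\<in>S \<Longrightarrow> w (\<sigma> x) = z * w x" "z \<noteq> 1"
  shows "sum w S = 0"
proof -
  have img: "\<sigma> ` S = S" using endo_inj_surj assms by blast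
  have "sum w S = sum w (\<sigma> ` S)" using img by simp
  also have "\<dots> = sum (w \<circ> \<sigma>) S" using assms(3) by (simp add: sum.reindex)
  also have "\<dots> = z * sum w S" using assms(4) by (simp add: sum_distrib_left)
  finally have "(1 - z) * sum w S = 0" by (simp add: algebra_simps)
  thus ?thesis using assms(5) by simp
qed

lemma count_sum:
  fixes w :: "'b \<Rightarrow> complex"
  assumes "finite X" "finite A"
  shows "(\<Sum>\<alpha>\<in>A. of_nat (card {x\<in>X. h x = \<alpha>}) * w \<alpha>) = (\<Sum>x\<in>{x\<in>X. h x \<in> A}. w (h x))"
proof -
  have "(\<Sum>x\<in>{x\<in>X. h x \<in> A}. w (h x)) = (\<Sum>\<alpha>\<in>A. \<Sum>x\<in>{x\<in>{x\<in>X. h x \<in> A}. h x = \<alpha>}. w (h x))"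
    by (rule sum.group[symmetric]) (use assms in auto)
  also have "\<dots> = (\<Sum>\<alpha>\<in>A. of_nat (card {x\<in>X. h x = \<alpha>}) * w \<alpha>)"
  proof (rule sum.cong[OF refl])
    fix \<alpha> assume "\<alpha> \<in> A"
    hence "{x\<in>{x\<in>X. h x \<in> A}. h x = \<alpha>} = {x\<in>X. h x = \<alpha>}" by auto
    thus "(\<Sum>x\<in>{x\<in>{x\<in>X. h x \<in> A}. h x = \<alpha>}. w (h x)) = of_nat (card {x\<in>X. h x = \<alpha>}) * w \<alpha>"
      by simp
  qed
  finally show ?thesis by simp
qed

lemma layout_exists:
  fixes k N :: nat
  assumes "(\<Sum>i<k. len i) = N"
  shows "\<exists>f. bij_betw f {..<N} (SIGMA i:{..<k}. {..<len i})"
proof -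
  have "card (SIGMA i:{..<k}. {..<len i}) = N" using assms by (subst card_SigmaI) auto
  thus ?thesis using finite_same_card_bij[of "{..<N}" "SIGMA i:{..<k}. {..<len i}"] by auto
qed


locale layout =
  fixes N k :: nat and len :: "nat \<Rightarrow> nat" and f :: "nat \<Rightarrow> nat \<times> nat"
  assumes f_bij: "bij_betw f {..<N} (SIGMA i:{..<k}. {..<len i})"
    and len_pos: "\<And>i. i < k \<Longrightarrow> len i > 0"
begin

definition grp where "grp c = fst (f c)"
definition pos where "pos c = snd (f c)"
definition G where "G i = {c\<in>{..<N}. grp c = i}"
definition om where "om c = zeta (len (grp c)) ^ pos c"
definition finv where "finv = inv_into {..<N} f"
definition rot where "rot i c = (if c < N \<and> grp c = i then finv (i, Suc (pos c) mod len i) else c)"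
definition A where "A = {\<alpha>. (\<forall>c. N \<le> c \<longrightarrow> \<alpha> c = 0) \<and> (\<forall>i<k. sum \<alpha> (G i) = len i)}"
definition wt where "wt \<alpha> = (\<Prod>c<N. om c ^ \<alpha> c)"
definition Phi :: "((nat \<Rightarrow> nat) \<Rightarrow> real) \<Rightarrow> complex" where
  "Phi h = (\<Sum>\<alpha>\<in>A. of_real (h \<alpha>) * wt \<alpha>)"

lemma f_in: "c < N \<Longrightarrow> f c \<in> (SIGMA i:{..<k}. {..<len i})"
  using f_bij by (auto simp: bij_betw_def)

lemma grp_lt: "c < N \<Longrightarrow> grp c < k"
  using f_in[of c] by (auto simp: grp_def)

lemma pos_lt: "c < N \<Longrightarrow> pos c < len (grp c)"
  using f_in[of c] by (auto simp: grp_def pos_def)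

lemma finv_in: "p \<in> (SIGMA i:{..<k}. {..<len i}) \<Longrightarrow> finv p < N \<and> f (finv p) = p"
  using f_bij unfolding finv_def bij_betw_def
  by (metis f_inv_into_f inv_into_into lessThan_iff)

lemma f_inj: "c < N \<Longrightarrow> c' < N \<Longrightarrow> f c = f c' \<Longrightarrow> c = c'"
  using f_bij by (auto simp: bij_betw_def inj_on_def)

lemma G_sub: "G i \<subseteq> {..<N}" by (auto simp: G_def)

lemma in_G: "c < N \<Longrightarrow> c \<in> G (grp c)" by (auto simp: G_def)

lemma card_G: assumes "i < k" shows "card (G i) = len i"
proof -
  have "bij_betw (\<lambda>c. pos c) (G i) {..<len i}"
    unfolding bij_betw_def
  proof
    show "inj_on pos (G i)"
    proof (rule inj_onI)
      fix x y assume "x \<in> G i" "y \<in> G i" "pos x = pos y"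
      hence "x < N" "y < N" "f x = f y" by (auto simp: G_def pos_def grp_def intro: prod_eqI)
      thus "x = y" by (rule f_inj)
    qed
    show "pos ` G i = {..<len i}"
    proof
      show "pos ` G i \<subseteq> {..<len i}" using pos_lt by (auto simp: G_def)
      show "{..<len i} \<subseteq> pos ` G i"
      proof
        fix j assume "j \<in> {..<len i}"
        hence "(i,j) \<in> (SIGMA i:{..<k}. {..<len i})" using assms by auto
        from finv_in[OF this] have "finv (i,j) \<in> G i" "pos (finv (i,j)) = j"
          by (auto simp: G_def grp_def pos_def)
        thus "j \<in> pos ` G i" by (metis imageI)
      qed
    qed
  qed
  thus ?thesis by (simp add: bij_betw_same_card)
qed

lemma len_le: "i < k \<Longrightarrow> len i \<le> N"
  using card_G[of i] G_sub card_mono[of "{..<N}" "G i"] by auto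

lemma rot_G: assumes "c \<in> G i" shows "rot i c \<in> G i" "pos (rot i c) = Suc (pos c) mod len i"
proof -
  have c: "c < N" "grp c = i" using assms by (auto simp: G_def)
  have i: "i < k" using grp_lt c by auto
  have "(i, Suc (pos c) mod len i) \<in> (SIGMA i:{..<k}. {..<len i})"
    using i len_pos[OF i] by auto
  from finv_in[OF this] c show "rot i c \<in> G i" "pos (rot i c) = Suc (pos c) mod len i"
    by (auto simp: rot_def G_def grp_def pos_def)
qed

lemma rot_out: "c \<notin> G i \<Longrightarrow> rot i c = c"
  by (auto simp: rot_def G_def)

lemma rot_inj: "inj_on (rot i) (G i)"
proof (rule inj_onI)
  fix x y assume xy: "x \<in> G i" "y \<in> G i" "rot i x = rot i y"
  have "grp x = i" "grp y = i" "x < N" "y < N" using xy by (auto simp: G_def)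
  have i: "i < k" using grp_lt \<open>x < N\<close> \<open>grp x = i\<close> by auto
  have "pos x < len i" "pos y < len i" using pos_lt[of x] pos_lt[of y] \<open>grp x = i\<close> \<open>grp y = i\<close> \<open>x<N\<close> \<open>y<N\<close> by auto
  from rot_G(2)[OF xy(1)] rot_G(2)[OF xy(2)] xy(3)
  have "Suc (pos x) mod len i = Suc (pos y) mod len i" by simp
  hence "pos x = pos y" using \<open>pos x < len i\<close> \<open>pos y < len i\<close>
    by (cases "Suc (pos x) = len i"; cases "Suc (pos y) = len i") auto
  hence "f x = f y" using \<open>grp x = i\<close> \<open>grp y = i\<close> by (auto simp: grp_def pos_def intro: prod_eqI)
  thus "x = y" using f_inj \<open>x<N\<close> \<open>y<N\<close> by blast
qed

lemma om_rot: assumes "c \<in> G i" shows "om (rot i c) = zeta (len i) * om c"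
proof -
  have c: "c < N" "grp c = i" using assms by (auto simp: G_def)
  have i: "i < k" using grp_lt c by auto
  have "grp (rot i c) = i" using rot_G(1)[OF assms] by (auto simp: G_def)
  hence "om (rot i c) = zeta (len i) ^ (Suc (pos c) mod len i)"
    using rot_G(2)[OF assms] by (simp add: om_def)
  also have "\<dots> = zeta (len i) ^ Suc (pos c)" using zeta_pow_mod len_pos[OF i] by blast
  finally show ?thesis using c by (simp add: om_def)
qed

lemma prod_rot: assumes "X \<subseteq> G i"
  shows "(\<Prod>c\<in>rot i ` X. om c) = zeta (len i) ^ card X * (\<Prod>c\<in>X. om c)"
proof -
  have "inj_on (rot i) X" using rot_inj assms inj_on_subset by blast
  hence "(\<Prod>c\<in>rot i ` X. om c) = (\<Prod>c\<in>X. om (rot i c))" by (simp add: prod.reindex)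
  also have "\<dots> = (\<Prod>c\<in>X. zeta (len i) * om c)" using om_rot assms by (intro prod.cong) auto
  also have "\<dots> = zeta (len i) ^ card X * (\<Prod>c\<in>X. om c)" by (simp add: prod.distrib)
  finally show ?thesis .
qed

lemma om_nz: "om c \<noteq> 0" unfolding om_def by (rule zeta_nz)

lemma A_bound: assumes "\<alpha> \<in> A" "c < N" shows "\<alpha> c \<le> N"
proof -
  have g: "grp c < k" using grp_lt assms(2) by auto
  have "\<alpha> c \<le> sum \<alpha> (G (grp c))"
    using in_G[OF assms(2)] finite_subset[OF G_sub] by (intro member_le_sum) auto
  also have "\<dots> = len (grp c)" using assms(1) g by (auto simp: A_def)
  finally show ?thesis using len_le[OF g] by simp
qed

lemma A_finite: "finite A"
proof -
  have "A \<subseteq> {\<alpha>. \<forall>x. (x \<in> {..<N} \<longrightarrow> \<alpha> x \<in> {..N}) \<and> (x \<notin> {..<N} \<longrightarrow> \<alpha> x = 0)}"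
    using A_bound by (auto simp: A_def)
  moreover have "finite {\<alpha>. \<forall>x. (x \<in> {..<N} \<longrightarrow> \<alpha> x \<in> {..N}) \<and> (x \<notin> {..<N} \<longrightarrow> \<alpha> x = (0::nat))}"
    by (rule finite_set_of_finite_funs) auto
  ultimately show ?thesis by (rule finite_subset)
qed

lemma Phi_lin:
  assumes "finite I"
  shows "Phi (\<lambda>\<alpha>. \<Sum>\<nu>\<in>I. c \<nu> * h \<nu> \<alpha>) = (\<Sum>\<nu>\<in>I. of_real (c \<nu>) * Phi (h \<nu>))"
proof -
  have "Phi (\<lambda>\<alpha>. \<Sum>\<nu>\<in>I. c \<nu> * h \<nu> \<alpha>) = (\<Sum>\<alpha>\<in>A. \<Sum>\<nu>\<in>I. of_real (c \<nu>) * (of_real (h \<nu> \<alpha>) * wt \<alpha>))"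
    unfolding Phi_def by (simp add: sum_distrib_right mult.assoc)
  also have "\<dots> = (\<Sum>\<nu>\<in>I. \<Sum>\<alpha>\<in>A. of_real (c \<nu>) * (of_real (h \<nu> \<alpha>) * wt \<alpha>))"
    by (rule sum.swap)
  also have "\<dots> = (\<Sum>\<nu>\<in>I. of_real (c \<nu>) * Phi (h \<nu>))"
    unfolding Phi_def by (simp add: sum_distrib_left)
  finally show ?thesis .
qed

lemma Phi_cong: "(\<And>\<alpha>. \<alpha> \<in> A \<Longrightarrow> h \<alpha> = h' \<alpha>) \<Longrightarrow> Phi h = Phi h'"
  unfolding Phi_def by (intro sum.cong) auto

end


locale lgraph = layout N k len f
  for N k :: nat and len :: "nat \<Rightarrow> nat" and f :: "nat \<Rightarrow> nat \<times> nat" +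
  fixes V :: "'v set" and V' :: "'v set" and par :: "'v \<Rightarrow> 'v" and E :: "'v \<Rightarrow> 'v \<Rightarrow> bool"
  assumes V_fin: "finite V" and card_V: "card V = N" and V'_sub: "V' \<subseteq> V"
    and par_in: "\<And>w. w \<in> V' \<Longrightarrow> par w \<in> V"
    and proper_iff: "\<And>\<kappa>. proper_colouring V E \<kappa> \<longleftrightarrow> (\<forall>w\<in>V'. \<kappa> (par w) \<noteq> \<kappa> w)"
    and par_E: "\<And>w. w \<in> V' \<Longrightarrow> E (par w) w \<and> E w (par w)"
begin

definition cs :: "('v \<Rightarrow> nat) \<Rightarrow> nat \<Rightarrow> nat" where
  "cs \<kappa> = (\<lambda>j. if j < N then card {v\<in>V. \<kappa> v = j} else 0)"

definition KA where
  "KA = {\<kappa> \<in> V \<rightarrow>\<^sub>E {..<N}. \<forall>i<k. card {v\<in>V. grp (\<kappa> v) = i} = len i}"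

definition KF where "KF F = {\<kappa>\<in>KA. \<forall>w\<in>F. \<kappa> (par w) = \<kappa> w}"

definition T where "T F = (\<Sum>\<kappa>\<in>KF F. \<Prod>v\<in>V. om (\<kappa> v))"

lemma KA_fin: "finite KA"
proof -
  have "finite (V \<rightarrow>\<^sub>E {..<N})" using V_fin by (simp add: finite_PiE)
  thus ?thesis unfolding KA_def by (rule finite_subset[rotated]) auto
qed

lemma KF_fin: "finite (KF F)"
  using KA_fin unfolding KF_def by (rule finite_subset[rotated]) auto

lemma cs_group: assumes "\<kappa> \<in> V \<rightarrow>\<^sub>E {..<N}" "i < k"
  shows "sum (cs \<kappa>) (G i) = card {v\<in>V. grp (\<kappa> v) = i}"
proof -
  let ?S = "{v\<in>V. grp (\<kappa> v) = i}"
  have "card ?S = (\<Sum>v\<in>?S. 1)" by simp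
  also have "\<dots> = (\<Sum>c\<in>G i. \<Sum>v\<in>{v\<in>?S. \<kappa> v = c}. 1)"
    by (rule sum.group[symmetric]) (use V_fin assms in \<open>auto simp: G_def PiE_def finite_subset[OF G_sub]\<close>)
  also have "\<dots> = (\<Sum>c\<in>G i. cs \<kappa> c)"
  proof (rule sum.cong[OF refl])
    fix c assume "c \<in> G i"
    hence "{v\<in>?S. \<kappa> v = c} = {v\<in>V. \<kappa> v = c}" "c < N" by (auto simp: G_def)
    thus "(\<Sum>v\<in>{v\<in>?S. \<kappa> v = c}. 1) = cs \<kappa> c" by (simp add: cs_def)
  qed
  finally show ?thesis by simp
qed

lemma cs_A: assumes "\<kappa> \<in> V \<rightarrow>\<^sub>E {..<N}" shows "cs \<kappa> \<in> A \<longleftrightarrow> \<kappa> \<in> KA"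
  using cs_group[OF assms] assms by (auto simp: A_def KA_def cs_def)

lemma wt_cs: assumes "\<kappa> \<in> V \<rightarrow>\<^sub>E {..<N}" shows "wt (cs \<kappa>) = (\<Prod>v\<in>V. om (\<kappa> v))"
proof -
  have "(\<Prod>v\<in>V. om (\<kappa> v)) = (\<Prod>c\<in>{..<N}. \<Prod>v\<in>{v\<in>V. \<kappa> v = c}. om (\<kappa> v))"
    by (rule prod.group[symmetric]) (use V_fin assms in auto)
  also have "\<dots> = (\<Prod>c\<in>{..<N}. om c ^ cs \<kappa> c)"
  proof (rule prod.cong[OF refl])
    fix c assume "c \<in> {..<N}"
    have "(\<Prod>v\<in>{v\<in>V. \<kappa> v = c}. om (\<kappa> v)) = (\<Prod>v\<in>{v\<in>V. \<kappa> v = c}. om c)"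
      by (rule prod.cong) auto
    thus "(\<Prod>v\<in>{v\<in>V. \<kappa> v = c}. om (\<kappa> v)) = om c ^ cs \<kappa> c"
      using \<open>c \<in> {..<N}\<close> by (simp add: cs_def)
  qed
  finally show ?thesis by (simp add: wt_def)
qed

lemma Phi_X1:
  "Phi (\<lambda>\<alpha>. real (X_coeff V E \<alpha>)) =
     (\<Sum>\<kappa>\<in>KA. (if proper_colouring V E \<kappa> then 1 else 0) * (\<Prod>v\<in>V. om (\<kappa> v)))"
proof -
  let ?P = "{\<kappa> \<in> V \<rightarrow>\<^sub>E {..<N}. proper_colouring V E \<kappa>}"
  have finP: "finite ?P"
    by (rule finite_subset[of _ "V \<rightarrow>\<^sub>E {..<N}"]) (auto intro: finite_PiE simp: V_fin)
  have "Phi (\<lambda>\<alpha>. real (X_coeff V E \<alpha>)) = (\<Sum>\<alpha>\<in>A. of_nat (card {\<kappa>\<in>?P. cs \<kappa> = \<alpha>}) * wt \<alpha>)"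
    unfolding Phi_def
  proof (rule sum.cong[OF refl])
    fix \<alpha> assume "\<alpha> \<in> A"
    hence "X_coeff V E \<alpha> = card {\<kappa>\<in>?P. cs \<kappa> = \<alpha>}"
      unfolding X_coeff_def card_V
      by (intro arg_cong[where f=card]) (auto simp: A_def cs_def fun_eq_iff)
    thus "complex_of_real (real (X_coeff V E \<alpha>)) * wt \<alpha> = of_nat (card {\<kappa>\<in>?P. cs \<kappa> = \<alpha>}) * wt \<alpha>"
      by simp
  qed
  also have "\<dots> = (\<Sum>\<kappa>\<in>{\<kappa>\<in>?P. cs \<kappa> \<in> A}. wt (cs \<kappa>))"
    by (rule count_sum[OF finP A_finite])
  also have "\<dots> = (\<Sum>\<kappa>\<in>{\<kappa>\<in>KA. proper_colouring V E \<kappa>}. \<Prod>v\<in>V. om (\<kappa> v))"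
    by (rule sum.cong) (auto simp: cs_A wt_cs KA_def)
  also have "\<dots> = (\<Sum>\<kappa>\<in>KA. if proper_colouring V E \<kappa> then (\<Prod>v\<in>V. om (\<kappa> v)) else 0)"
    using KA_fin by (simp add: sum.inter_filter)
  also have "\<dots> = (\<Sum>\<kappa>\<in>KA. (if proper_colouring V E \<kappa> then 1 else 0) * (\<Prod>v\<in>V. om (\<kappa> v)))"
    by (rule sum.cong) auto
  finally show ?thesis .
qed

lemma incl_excl:
  "(if proper_colouring V E \<kappa> then 1 else 0 :: complex) =
   (\<Sum>F\<in>Pow V'. (-1) ^ card F * (if \<forall>w\<in>F. \<kappa> (par w) = \<kappa> w then 1 else 0))"
proof -
  have finV': "finite V'" using V_fin V'_sub finite_subset by blast
  let ?x = "\<lambda>w. (if \<kappa> (par w) = \<kappa> w then 1 else 0 :: complex)"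
  have "(if proper_colouring V E \<kappa> then 1 else 0 :: complex) = (\<Prod>w\<in>V'. - ?x w + 1)"
  proof (cases "proper_colouring V E \<kappa>")
    case True thus ?thesis using proper_iff by (simp add: prod.neutral)
  next
    case False
    then obtain w where "w\<in>V'" "\<kappa> (par w) = \<kappa> w" using proper_iff by auto
    thus ?thesis using False finV' by (subst prod_zero) auto
  qed
  also have "\<dots> = (\<Sum>F\<in>Pow V'. (\<Prod>w\<in>F. - ?x w) * (\<Prod>w\<in>V'-F. 1))"
    by (rule prod_add[OF finV'])
  also have "\<dots> = (\<Sum>F\<in>Pow V'. (-1) ^ card F * (if \<forall>w\<in>F. \<kappa> (par w) = \<kappa> w then 1 else 0))"
  proof (rule sum.cong[OF refl])
    fix F assume "F \<in> Pow V'"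
    hence finF: "finite F" using finV' finite_subset by auto
    have "(\<Prod>w\<in>F. - ?x w) = (\<Prod>w\<in>F. (-1) * ?x w)" by simp
    also have "\<dots> = (\<Prod>w\<in>F. -1) * (\<Prod>w\<in>F. ?x w)" by (rule prod.distrib)
    also have "\<dots> = (-1) ^ card F * (\<Prod>w\<in>F. ?x w)" by simp
    finally have "(\<Prod>w\<in>F. - ?x w) = (-1) ^ card F * (\<Prod>w\<in>F. ?x w)" .
    also have "(\<Prod>w\<in>F. ?x w) = (if \<forall>w\<in>F. \<kappa> (par w) = \<kappa> w then 1 else 0)"
      using finF by (auto simp: prod_zero)
    finally show "(\<Prod>w\<in>F. - ?x w) * (\<Prod>w\<in>V'-F. 1) = (-1) ^ card F * (if \<forall>w\<in>F. \<kappa> (par w) = \<kappa> w then 1 else 0)"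
      by simp
  qed
  finally show ?thesis .
qed

lemma Phi_X:
  "Phi (\<lambda>\<alpha>. real (X_coeff V E \<alpha>)) = (\<Sum>F\<in>Pow V'. (-1) ^ card F * T F)"
proof -
  have "Phi (\<lambda>\<alpha>. real (X_coeff V E \<alpha>)) =
     (\<Sum>\<kappa>\<in>KA. \<Sum>F\<in>Pow V'. (-1) ^ card F * ((if \<forall>w\<in>F. \<kappa> (par w) = \<kappa> w then 1 else 0) * (\<Prod>v\<in>V. om (\<kappa> v))))"
    unfolding Phi_X1 incl_excl by (simp add: sum_distrib_right mult.assoc)
  also have "\<dots> = (\<Sum>F\<in>Pow V'. \<Sum>\<kappa>\<in>KA. (-1) ^ card F * ((if \<forall>w\<in>F. \<kappa> (par w) = \<kappa> w then 1 else 0) * (\<Prod>v\<in>V. om (\<kappa> v))))"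
    by (rule sum.swap)
  also have "\<dots> = (\<Sum>F\<in>Pow V'. (-1) ^ card F * T F)"
  proof (rule sum.cong[OF refl])
    fix F
    have "T F = (\<Sum>\<kappa>\<in>KA. if \<forall>w\<in>F. \<kappa> (par w) = \<kappa> w then (\<Prod>v\<in>V. om (\<kappa> v)) else 0)"
      unfolding T_def KF_def using KA_fin by (simp add: sum.inter_filter)
    also have "\<dots> = (\<Sum>\<kappa>\<in>KA. (if \<forall>w\<in>F. \<kappa> (par w) = \<kappa> w then 1 else 0) * (\<Prod>v\<in>V. om (\<kappa> v)))"
      by (rule sum.cong) auto
    finally have "T F = (\<Sum>\<kappa>\<in>KA. (if \<forall>w\<in>F. \<kappa> (par w) = \<kappa> w then 1 else 0) * (\<Prod>v\<in>V. om (\<kappa> v)))" .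
    thus "(\<Sum>\<kappa>\<in>KA. (-1) ^ card F * ((if \<forall>w\<in>F. \<kappa> (par w) = \<kappa> w then 1 else 0) * (\<Prod>v\<in>V. om (\<kappa> v)))) = (-1) ^ card F * T F"
      by (simp add: sum_distrib_left)
  qed
  finally show ?thesis .
qed

end


context lgraph begin

definition adjF where "adjF F u w \<longleftrightarrow> (w \<in> F \<and> u = par w) \<or> (u \<in> F \<and> w = par u)"
definition comp where "comp F v = {u. (adjF F)\<^sup>*\<^sup>* v u}"

lemma adjF_sym: "adjF F u w \<longleftrightarrow> adjF F w u" by (auto simp: adjF_def)

lemma adjF_V: "F \<subseteq> V' \<Longrightarrow> adjF F u w \<Longrightarrow> u \<in> V \<and> w \<in> V"
  using par_in V'_sub by (auto simp: adjF_def)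

lemma adjF_E: "F \<subseteq> V' \<Longrightarrow> adjF F u w \<Longrightarrow> E u w"
  using par_E by (auto simp: adjF_def)

lemma comp_self: "v \<in> comp F v" by (simp add: comp_def)

lemma comp_sub: assumes "F \<subseteq> V'" "v \<in> V" shows "comp F v \<subseteq> V"
proof
  fix u assume "u \<in> comp F v"
  hence "(adjF F)\<^sup>*\<^sup>* v u" by (simp add: comp_def)
  thus "u \<in> V" by (induct rule: rtranclp_induct) (use assms adjF_V in auto)
qed

lemma comp_closed: "u \<in> comp F v \<Longrightarrow> adjF F u x \<Longrightarrow> x \<in> comp F v"
  by (auto simp: comp_def intro: rtranclp.rtrancl_into_rtrancl)

lemma comp_const: assumes "\<forall>w\<in>F. \<kappa> (par w) = \<kappa> w" "u \<in> comp F v" shows "\<kappa> u = \<kappa> v"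
proof -
  have "(adjF F)\<^sup>*\<^sup>* v u" using assms(2) by (simp add: comp_def)
  thus ?thesis by (induct rule: rtranclp_induct) (use assms(1) in \<open>auto simp: adjF_def\<close>)
qed

definition key where "key \<kappa> = (\<lambda>u. if u \<in> V then grp (\<kappa> u) else 0)"

lemma fiber_zero:
  assumes F: "F \<subseteq> V'" and bad: "\<forall>\<kappa>\<in>KF F. \<exists>v\<in>V. \<not> len (grp (\<kappa> v)) dvd card (comp F v)"
  shows "(\<Sum>\<kappa>\<in>{\<kappa>\<in>KF F. key \<kappa> = g}. \<Prod>v\<in>V. om (\<kappa> v)) = 0"
proof (cases "{\<kappa>\<in>KF F. key \<kappa> = g} = {}")
  case True show ?thesis unfolding True by simp
next
  case False
  let ?S = "{\<kappa>\<in>KF F. key \<kappa> = g}"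
  obtain \<kappa>0 where k0: "\<kappa>0 \<in> KF F" "key \<kappa>0 = g" using False by auto
  obtain v where v: "v \<in> V" "\<not> len (grp (\<kappa>0 v)) dvd card (comp F v)" using bad k0 by auto
  define i where "i = grp (\<kappa>0 v)"
  define C where "C = comp F v"
  have k0N: "\<kappa>0 v < N" using k0(1) v(1) by (auto simp: KF_def KA_def PiE_def)
  have ik: "i < k" using grp_lt k0N by (simp add: i_def)
  have CV: "C \<subseteq> V" using comp_sub F v by (simp add: C_def)
  have finC: "finite C" using CV V_fin finite_subset by blast
  have inG: "\<kappa> u \<in> G i" if "\<kappa> \<in> ?S" "u \<in> C" for \<kappa> u
  proof -
    have kF: "\<forall>w\<in>F. \<kappa> (par w) = \<kappa> w" "\<kappa> \<in> KA" using that(1) by (auto simp: KF_def)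
    have "\<kappa> u = \<kappa> v" using comp_const[OF kF(1)] that(2) by (simp add: C_def)
    moreover have "grp (\<kappa> v) = i"
    proof -
      have "key \<kappa> v = key \<kappa>0 v" using that(1) k0(2) by simp
      thus ?thesis using v(1) by (simp add: key_def i_def)
    qed
    moreover have "\<kappa> v < N" using kF(2) v(1) by (auto simp: KA_def PiE_def)
    ultimately show ?thesis by (simp add: G_def)
  qed
  define \<sigma> where "\<sigma> \<kappa> = (\<lambda>u. if u \<in> C then rot i (\<kappa> u) else \<kappa> u)" for \<kappa> :: "'v \<Rightarrow> nat"
  have grp_\<sigma>: "grp (\<sigma> \<kappa> u) = grp (\<kappa> u)" if "\<kappa> \<in> ?S" for \<kappa> u
    using inG[OF that] rot_G(1) by (auto simp: \<sigma>_def G_def)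
  show ?thesis
  proof (rule sum_rot_zero)
    show "finite ?S" using KF_fin by auto
    show "\<sigma> ` ?S \<subseteq> ?S"
    proof
      fix \<kappa>' assume "\<kappa>' \<in> \<sigma> ` ?S"
      then obtain \<kappa> where \<kappa>: "\<kappa> \<in> ?S" "\<kappa>' = \<sigma> \<kappa>" by auto
      have kA: "\<kappa> \<in> KA" and kF: "\<forall>w\<in>F. \<kappa> (par w) = \<kappa> w" and kk: "key \<kappa> = g"
        using \<kappa>(1) by (auto simp: KF_def)
      have "\<sigma> \<kappa> \<in> V \<rightarrow>\<^sub>E {..<N}"
      proof -
        have "\<kappa> \<in> V \<rightarrow>\<^sub>E {..<N}" using kA by (auto simp: KA_def)
        thus ?thesis using inG[OF \<kappa>(1)] rot_G(1) CV G_sub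
          by (auto simp: \<sigma>_def PiE_def Pi_def extensional_def G_def) 
      qed
      moreover have "\<forall>i<k. card {v\<in>V. grp (\<sigma> \<kappa> v) = i} = len i"
        using kA grp_\<sigma>[OF \<kappa>(1)] by (simp add: KA_def)
      moreover have "\<forall>w\<in>F. \<sigma> \<kappa> (par w) = \<sigma> \<kappa> w"
      proof
        fix w assume w: "w \<in> F"
        have a: "adjF F (par w) w" using w by (auto simp: adjF_def)
        have "par w \<in> C \<longleftrightarrow> w \<in> C"
          using comp_closed[of _ F v] a adjF_sym by (auto simp: C_def)
        thus "\<sigma> \<kappa> (par w) = \<sigma> \<kappa> w" using kF w by (auto simp: \<sigma>_def)
      qed
      moreover have "key (\<sigma> \<kappa>) = g" using kk grp_\<sigma>[OF \<kappa>(1)] by (auto simp: key_def)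
      ultimately show "\<kappa>' \<in> ?S" using \<kappa>(2) by (auto simp: KF_def KA_def)
    qed
    show "inj_on \<sigma> ?S"
    proof (rule inj_onI)
      fix \<kappa>1 \<kappa>2 assume k: "\<kappa>1 \<in> ?S" "\<kappa>2 \<in> ?S" "\<sigma> \<kappa>1 = \<sigma> \<kappa>2"
      show "\<kappa>1 = \<kappa>2"
      proof
        fix u show "\<kappa>1 u = \<kappa>2 u"
        proof (cases "u \<in> C")
          case True
          hence "rot i (\<kappa>1 u) = rot i (\<kappa>2 u)" using fun_cong[OF k(3), of u] by (simp add: \<sigma>_def)
          thus ?thesis using rot_inj inG[OF k(1) True] inG[OF k(2) True] by (auto simp: inj_on_def)
        next
          case False thus ?thesis using fun_cong[OF k(3), of u] by (simp add: \<sigma>_def)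
        qed
      qed
    qed
    show "(\<Prod>u\<in>V. om (\<sigma> \<kappa> u)) = zeta (len i) ^ card C * (\<Prod>u\<in>V. om (\<kappa> u))" if "\<kappa> \<in> ?S" for \<kappa>
    proof -
      have split: "(\<Prod>u\<in>V. h u) = (\<Prod>u\<in>C. h u) * (\<Prod>u\<in>V-C. h u)" for h :: "'v \<Rightarrow> complex"
        using prod.subset_diff[OF CV V_fin] by (simp add: mult.commute)
      have "(\<Prod>u\<in>C. om (\<sigma> \<kappa> u)) = (\<Prod>u\<in>C. zeta (len i) * om (\<kappa> u))"
        using om_rot inG[OF that] by (intro prod.cong) (auto simp: \<sigma>_def)
      also have "\<dots> = zeta (len i) ^ card C * (\<Prod>u\<in>C. om (\<kappa> u))" by (simp add: prod.distrib)
      finally have 1: "(\<Prod>u\<in>C. om (\<sigma> \<kappa> u)) = zeta (len i) ^ card C * (\<Prod>u\<in>C. om (\<kappa> u))" .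
      have 2: "(\<Prod>u\<in>V-C. om (\<sigma> \<kappa> u)) = (\<Prod>u\<in>V-C. om (\<kappa> u))"
        by (rule prod.cong) (auto simp: \<sigma>_def)
      show ?thesis using split[of "\<lambda>u. om (\<sigma> \<kappa> u)"] split[of "\<lambda>u. om (\<kappa> u)"] 1 2 by simp
    qed
    show "zeta (len i) ^ card C \<noteq> 1"
      using zeta_pow_ne1[OF len_pos[OF ik]] v(2) by (simp add: i_def C_def)
  qed
qed

lemma T_nonzero:
  assumes F: "F \<subseteq> V'" and T: "T F \<noteq> 0"
  shows "\<exists>\<kappa>\<in>KF F. \<forall>v\<in>V. len (grp (\<kappa> v)) dvd card (comp F v)"
proof (rule ccontr)
  assume "\<not> ?thesis"
  hence bad: "\<forall>\<kappa>\<in>KF F. \<exists>v\<in>V. \<not> len (grp (\<kappa> v)) dvd card (comp F v)" by auto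
  have "T F = (\<Sum>g\<in>key ` KF F. \<Sum>\<kappa>\<in>{\<kappa>\<in>KF F. key \<kappa> = g}. \<Prod>v\<in>V. om (\<kappa> v))"
    unfolding T_def by (rule sum.image_gen[OF KF_fin])
  also have "\<dots> = 0" using fiber_zero[OF F bad] by simp
  finally show False using T by simp
qed

lemma good_partition:
  assumes F: "F \<subseteq> V'" and kF: "\<kappa> \<in> KF F" and good: "\<forall>v\<in>V. len (grp (\<kappa> v)) dvd card (comp F v)"
  defines "B \<equiv> \<lambda>i. {u\<in>V. grp (\<kappa> u) = i}"
  shows "connected_partition V E (B ` {..<k}) \<and> partition_type (B ` {..<k}) = image_mset len (mset_set {..<k})"
proof -
  have kA: "\<kappa> \<in> KA" and kc: "\<forall>w\<in>F. \<kappa> (par w) = \<kappa> w" using kF by (auto simp: KF_def)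
  have cardB: "card (B i) = len i" if "i < k" for i using kA that by (auto simp: KA_def B_def)
  have kN: "\<kappa> v < N" if "v \<in> V" for v using kA that by (auto simp: KA_def PiE_def)
  have compB: "comp F v = B (grp (\<kappa> v))" if v: "v \<in> V" for v
  proof (rule card_subset_eq)
    show "finite (B (grp (\<kappa> v)))" using V_fin by (simp add: B_def)
    show "comp F v \<subseteq> B (grp (\<kappa> v))"
      using comp_sub[OF F v] comp_const[OF kc] by (auto simp: B_def)
    have ik: "grp (\<kappa> v) < k" using grp_lt kN v by auto
    have "card (comp F v) > 0"
      using comp_self[of v F] finite_subset[OF comp_sub[OF F v] V_fin] card_gt_0_iff by blast
    hence "len (grp (\<kappa> v)) \<le> card (comp F v)" using good v dvd_imp_le by blast
    moreover have "card (comp F v) \<le> card (B (grp (\<kappa> v)))"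
      using \<open>comp F v \<subseteq> _\<close> \<open>finite (B _)\<close> by (rule card_mono[rotated])
    ultimately show "card (comp F v) = card (B (grp (\<kappa> v)))" using cardB[OF ik] by simp
  qed
  have Bne: "B i \<noteq> {}" if "i < k" for i using cardB[OF that] len_pos[OF that] by auto
  have conn: "connected_on E (B i)" if i: "i < k" for i
    unfolding connected_on_def
  proof (intro conjI ballI)
    show "B i \<noteq> {}" using Bne[OF i] .
    fix u w assume uw: "u \<in> B i" "w \<in> B i"
    have uV: "u \<in> V" and gu: "grp (\<kappa> u) = i" using uw by (auto simp: B_def)
    have cu: "comp F u = B i" using compB[OF uV] gu by simp
    have "(adjF F)\<^sup>*\<^sup>* u w" using uw(2) cu by (auto simp: comp_def)
    thus "(\<lambda>x y. x \<in> B i \<and> y \<in> B i \<and> E x y)\<^sup>*\<^sup>* u w"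
    proof (induct rule: rtranclp_induct)
      case base show ?case by simp
    next
      case (step y z)
      have "y \<in> B i" "z \<in> B i" using step cu by (auto simp: comp_def intro: rtranclp.rtrancl_into_rtrancl)
      moreover have "E y z" using adjF_E[OF F step(2)] .
      ultimately show ?case using step(3) by (auto intro: rtranclp.rtrancl_into_rtrancl)
    qed
  qed
  have injB: "inj_on B {..<k}"
  proof (rule inj_onI)
    fix i j assume "i \<in> {..<k}" "j \<in> {..<k}" "B i = B j"
    then obtain u where "u \<in> B i" "u \<in> B j" using Bne by blast
    thus "i = j" by (auto simp: B_def)
  qed
  have cp: "connected_partition V E (B ` {..<k})"
    unfolding connected_partition_def
  proof (intro conjI ballI impI)
    show "\<Union> (B ` {..<k}) = V" using grp_lt kN by (auto simp: B_def)
  next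
    fix X assume "X \<in> B ` {..<k}" thus "X \<noteq> {}" using Bne by auto
  next
    fix X Y assume "X \<in> B ` {..<k}" "Y \<in> B ` {..<k}" "X \<noteq> Y"
    thus "X \<inter> Y = {}" by (auto simp: B_def)
  next
    fix X assume "X \<in> B ` {..<k}" thus "connected_on E X" using conn by auto
  qed
  have "partition_type (B ` {..<k}) = image_mset card (image_mset B (mset_set {..<k}))"
    unfolding partition_type_def using image_mset_mset_set[OF injB] by simp
  also have "\<dots> = image_mset len (mset_set {..<k})"
    by (simp add: multiset.map_comp) (rule image_mset_cong, auto simp: cardB)
  finally show ?thesis using cp by simp
qed

end


context layout begin

definition SS :: "nat list \<Rightarrow> (nat \<Rightarrow> nat set) set" where
  "SS \<nu> = {S. (\<forall>l<length \<nu>. S l \<subseteq> {..<N} \<and> card (S l) = \<nu> ! l) \<and> (\<forall>l\<ge>length \<nu>. S l = {})}"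
definition cc :: "nat list \<Rightarrow> (nat \<Rightarrow> nat set) \<Rightarrow> nat \<Rightarrow> nat" where
  "cc \<nu> S = (\<lambda>j. if j < N then card {l. l < length \<nu> \<and> j \<in> S l} else 0)"
definition SA where "SA \<nu> = {S\<in>SS \<nu>. \<forall>i<k. (\<Sum>l<length \<nu>. card (S l \<inter> G i)) = len i}"
definition Full where
  "Full \<nu> = {S\<in>SA \<nu>. \<forall>l<length \<nu>. \<forall>i<k. card (S l \<inter> G i) = 0 \<or> card (S l \<inter> G i) = len i}"
definition pw where "pw L S = (\<Prod>l<L. \<Prod>c\<in>S l. om c)"
definition W0 where "W0 = (\<Prod>c<N. om c)"

lemma SS_fin: "finite (SS \<nu>)"
proof -
  have "SS \<nu> \<subseteq> {S. \<forall>x. (x \<in> {..<length \<nu>} \<longrightarrow> S x \<in> Pow {..<N}) \<and> (x \<notin> {..<length \<nu>} \<longrightarrow> S x = {})}"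
    by (auto simp: SS_def)
  moreover have "finite {S. \<forall>x. (x \<in> {..<length \<nu>} \<longrightarrow> S x \<in> Pow {..<N}) \<and> (x \<notin> {..<length \<nu>} \<longrightarrow> S x = ({}::nat set))}"
    by (rule finite_set_of_finite_funs) auto
  ultimately show ?thesis by (rule finite_subset)
qed

lemma SA_fin: "finite (SA \<nu>)" using SS_fin by (auto simp: SA_def)

lemma cc_group: assumes "S \<in> SS \<nu>"
  shows "sum (cc \<nu> S) (G i) = (\<Sum>l<length \<nu>. card (S l \<inter> G i))"
proof -
  have fG: "finite (G i)" using finite_subset[OF G_sub] by simp
  have "sum (cc \<nu> S) (G i) = (\<Sum>c\<in>G i. \<Sum>l<length \<nu>. if c \<in> S l then 1 else 0)"
  proof (rule sum.cong[OF refl])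
    fix c assume "c \<in> G i"
    hence "c < N" by (auto simp: G_def)
    have "card {l. l < length \<nu> \<and> c \<in> S l} = card {l\<in>{..<length \<nu>}. c \<in> S l}" by simp
    also have "\<dots> = (\<Sum>l<length \<nu>. if c \<in> S l then 1 else 0)"
      by (simp add: sum.If_cases Int_def)
    finally show "cc \<nu> S c = (\<Sum>l<length \<nu>. if c \<in> S l then 1 else 0)" using \<open>c<N\<close> by (simp add: cc_def)
  qed
  also have "\<dots> = (\<Sum>l<length \<nu>. \<Sum>c\<in>G i. if c \<in> S l then 1 else 0)" by (rule sum.swap)
  also have "\<dots> = (\<Sum>l<length \<nu>. card (S l \<inter> G i))"
  proof (rule sum.cong[OF refl])
    fix l
    have "(\<Sum>c\<in>G i. if c \<in> S l then 1 else (0::nat)) = card (G i \<inter> {c. c \<in> S l})"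
      using fG by (simp add: sum.If_cases)
    also have "G i \<inter> {c. c \<in> S l} = S l \<inter> G i" by blast
    finally show "(\<Sum>c\<in>G i. if c \<in> S l then 1 else 0) = card (S l \<inter> G i)" .
  qed
  finally show ?thesis .
qed

lemma cc_A: "S \<in> SS \<nu> \<Longrightarrow> cc \<nu> S \<in> A \<longleftrightarrow> S \<in> SA \<nu>"
  using cc_group by (auto simp: A_def SA_def cc_def)

lemma wt_cc: assumes "S \<in> SS \<nu>" shows "wt (cc \<nu> S) = pw (length \<nu>) S"
proof -
  let ?L = "length \<nu>"
  have sub: "S l \<subseteq> {..<N}" for l using assms by (cases "l < ?L") (auto simp: SS_def)
  have "pw ?L S = (\<Prod>l<?L. \<Prod>c<N. if c \<in> S l then om c else 1)"
    unfolding pw_def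
  proof (rule prod.cong[OF refl])
    fix l
    have "(\<Prod>c<N. if c \<in> S l then om c else 1) = prod om ({..<N} \<inter> {c. c \<in> S l})"
      by (simp add: prod.If_cases)
    also have "{..<N} \<inter> {c. c \<in> S l} = S l" using sub[of l] by auto
    finally show "(\<Prod>c\<in>S l. om c) = (\<Prod>c<N. if c \<in> S l then om c else 1)" by simp
  qed
  also have "\<dots> = (\<Prod>c<N. \<Prod>l<?L. if c \<in> S l then om c else 1)" by (rule prod.swap)
  also have "\<dots> = (\<Prod>c<N. om c ^ cc \<nu> S c)"
  proof (rule prod.cong[OF refl])
    fix c assume "c \<in> {..<N}"
    have "(\<Prod>l<?L. if c \<in> S l then om c else 1) = (\<Prod>l\<in>{..<?L} \<inter> {l. c \<in> S l}. om c)"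
      by (simp add: prod.If_cases)
    also have "\<dots> = om c ^ card ({..<?L} \<inter> {l. c \<in> S l})" by simp
    also have "{..<?L} \<inter> {l. c \<in> S l} = {l. l < ?L \<and> c \<in> S l}" by auto
    finally show "(\<Prod>l<?L. if c \<in> S l then om c else 1) = om c ^ cc \<nu> S c"
      using \<open>c \<in> {..<N}\<close> by (simp add: cc_def)
  qed
  finally show ?thesis by (simp add: wt_def)
qed

lemma Phi_e1: "Phi (\<lambda>\<alpha>. real (e_coeff N \<nu> \<alpha>)) = (\<Sum>S\<in>SA \<nu>. pw (length \<nu>) S)"
proof -
  have "Phi (\<lambda>\<alpha>. real (e_coeff N \<nu> \<alpha>)) = (\<Sum>\<alpha>\<in>A. of_nat (card {S\<in>SS \<nu>. cc \<nu> S = \<alpha>}) * wt \<alpha>)"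
    unfolding Phi_def
  proof (rule sum.cong[OF refl])
    fix \<alpha> assume "\<alpha> \<in> A"
    hence "e_coeff N \<nu> \<alpha> = card {S\<in>SS \<nu>. cc \<nu> S = \<alpha>}"
      unfolding e_coeff_def
      by (intro arg_cong[where f=card]) (auto simp: A_def cc_def SS_def fun_eq_iff)
    thus "complex_of_real (real (e_coeff N \<nu> \<alpha>)) * wt \<alpha> = of_nat (card {S\<in>SS \<nu>. cc \<nu> S = \<alpha>}) * wt \<alpha>"
      by simp
  qed
  also have "\<dots> = (\<Sum>S\<in>{S\<in>SS \<nu>. cc \<nu> S \<in> A}. wt (cc \<nu> S))"
    by (rule count_sum[OF SS_fin A_finite])
  also have "\<dots> = (\<Sum>S\<in>SA \<nu>. pw (length \<nu>) S)"
    by (rule sum.cong) (auto simp: cc_A wt_cc SA_def)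
  finally show ?thesis .
qed

end


context layout begin

lemma G_disj: "i \<noteq> j \<Longrightarrow> G i \<inter> G j = {}" by (auto simp: G_def)

lemma full_pw: assumes S: "S \<in> Full \<nu>" shows "pw (length \<nu>) S = W0"
proof -
  let ?L = "length \<nu>"
  have SS: "S \<in> SS \<nu>" and SA: "S \<in> SA \<nu>" using S by (auto simp: Full_def SA_def)
  have "cc \<nu> S c = 1" if c: "c < N" for c
  proof -
    define i where "i = grp c"
    have ik: "i < k" using grp_lt c by (simp add: i_def)
    have cG: "c \<in> G i" using in_G c by (simp add: i_def)
    have fG: "finite (G i)" using finite_subset[OF G_sub] by simp
    have piece: "card (S l \<inter> G i) = 0 \<or> card (S l \<inter> G i) = len i" if "l < ?L" for l
      using S that ik by (auto simp: Full_def)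
    have eq: "c \<in> S l \<longleftrightarrow> card (S l \<inter> G i) = len i" if "l < ?L" for l
    proof
      assume "c \<in> S l"
      hence "S l \<inter> G i \<noteq> {}" using cG by auto
      hence "card (S l \<inter> G i) \<noteq> 0" using fG by auto
      thus "card (S l \<inter> G i) = len i" using piece[OF that] by auto
    next
      assume "card (S l \<inter> G i) = len i"
      hence "S l \<inter> G i = G i" using card_G[OF ik] fG by (intro card_subset_eq) auto
      thus "c \<in> S l" using cG by auto
    qed
    have "len i = (\<Sum>l<?L. card (S l \<inter> G i))" using SA ik by (auto simp: SA_def)
    also have "\<dots> = (\<Sum>l<?L. if c \<in> S l then len i else 0)"
      using piece eq by (intro sum.cong) auto
    also have "\<dots> = len i * card {l. l < ?L \<and> c \<in> S l}"
      by (simp add: sum.If_cases) (simp add: Int_def)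
    finally have "len i = len i * card {l. l < ?L \<and> c \<in> S l}" .
    hence "card {l. l < ?L \<and> c \<in> S l} = 1" using len_pos[OF ik] by (metis mult.right_neutral mult_left_cancel not_gr0)
    thus ?thesis using c by (simp add: cc_def)
  qed
  hence "wt (cc \<nu> S) = W0" by (simp add: wt_def W0_def)
  thus ?thesis using wt_cc[OF SS] by simp
qed

definition mk where "mk S = (\<lambda>l i. card (S l \<inter> G i))"

lemma nonfull_fiber_zero:
  "(\<Sum>S\<in>{S\<in>SA \<nu> - Full \<nu>. mk S = M}. pw (length \<nu>) S) = 0"
proof (cases "{S\<in>SA \<nu> - Full \<nu>. mk S = M} = {}")
  case True show ?thesis unfolding True by simp
next
  case False
  let ?L = "length \<nu>"
  let ?X = "{S\<in>SA \<nu> - Full \<nu>. mk S = M}"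
  obtain S0 where S0: "S0 \<in> SA \<nu>" "S0 \<notin> Full \<nu>" "mk S0 = M" using False by auto
  then obtain l i where li: "l < ?L" "i < k" "card (S0 l \<inter> G i) \<noteq> 0" "card (S0 l \<inter> G i) \<noteq> len i"
    by (auto simp: Full_def)
  define m where "m = M l i"
  have fG: "finite (G i)" using finite_subset[OF G_sub] by simp
  have m0: "0 < m" "m < len i"
  proof -
    show "0 < m" using li S0(3) by (auto simp: m_def mk_def)
    have "card (S0 l \<inter> G i) \<le> card (G i)" using fG by (intro card_mono) auto
    thus "m < len i" using li S0(3) card_G[OF li(2)] by (auto simp: m_def mk_def)
  qed
  have cardX: "card (S l \<inter> G i) = m" if "S \<in> ?X" for S using that by (auto simp: m_def mk_def)
  define \<sigma> where "\<sigma> S = S(l := (S l - G i) \<union> rot i ` (S l \<inter> G i))" for S :: "nat \<Rightarrow> nat set"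
  have rotsub: "rot i ` (X \<inter> G i) \<subseteq> G i" for X using rot_G(1) by auto
  have cardrot: "card (rot i ` (X \<inter> G i)) = card (X \<inter> G i)" for X
    using rot_inj by (intro card_image) (auto intro: inj_on_subset)
  have piece_i: "\<sigma> S l \<inter> G i = rot i ` (S l \<inter> G i)" for S using rotsub by (auto simp: \<sigma>_def)
  have piece_j: "\<sigma> S l \<inter> G j = S l \<inter> G j" if "j \<noteq> i" for S j
    using rotsub G_disj[OF that] by (auto simp: \<sigma>_def)
  have mk_\<sigma>: "mk (\<sigma> S) = mk S" for S
  proof -
    have "card (\<sigma> S l' \<inter> G j) = card (S l' \<inter> G j)" for l' j
    proof (cases "l' = l")
      case True thus ?thesis
        using piece_i[of S] piece_j[of j S] cardrot[of "S l"] by (cases "j = i") auto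
    next
      case False thus ?thesis by (simp add: \<sigma>_def)
    qed
    thus ?thesis by (auto simp: mk_def)
  qed
  have SS_\<sigma>: "\<sigma> S \<in> SS \<nu>" if S: "S \<in> SS \<nu>" for S
  proof -
    have sub: "S l \<subseteq> {..<N}" "card (S l) = \<nu> ! l" using S li(1) by (auto simp: SS_def)
    have finSl: "finite (S l)" using sub(1) finite_subset by blast
    have "\<sigma> S l \<subseteq> {..<N}" using sub(1) rotsub[of "S l"] G_sub[of i] by (auto simp: \<sigma>_def)
    moreover have "card (\<sigma> S l) = card (S l)"
    proof -
      have "card (\<sigma> S l) = card (S l - G i) + card (rot i ` (S l \<inter> G i))"
        unfolding \<sigma>_def fun_upd_same using finSl rotsub[of "S l"]
        by (intro card_Un_disjoint) (auto intro: finite_subset[OF _ finite_imageI])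
      also have "\<dots> = card (S l - G i) + card (S l \<inter> G i)" using cardrot by simp
      also have "\<dots> = card (S l)" using finSl
        using card_Int_Diff[of "S l" "G i"] by simp
      finally show ?thesis .
    qed
    ultimately show ?thesis using S li(1) by (auto simp: SS_def \<sigma>_def)
  qed
  have SA_mk: "S \<in> SA \<nu> \<longleftrightarrow> S' \<in> SA \<nu>" if "S \<in> SS \<nu>" "S' \<in> SS \<nu>" "mk S = mk S'" for S S'
  proof -
    have "card (S l' \<inter> G j) = card (S' l' \<inter> G j)" for l' j using that(3) by (auto simp: mk_def fun_eq_iff)
    thus ?thesis using that(1,2) by (simp add: SA_def)
  qed
  have Full_mk: "S \<in> Full \<nu> \<longleftrightarrow> S' \<in> Full \<nu>" if "S \<in> SA \<nu>" "S' \<in> SA \<nu>" "mk S = mk S'" for S S'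
  proof -
    have "card (S l' \<inter> G j) = card (S' l' \<inter> G j)" for l' j using that(3) by (auto simp: mk_def fun_eq_iff)
    thus ?thesis using that(1,2) by (simp add: Full_def)
  qed
  show ?thesis
  proof (rule sum_rot_zero)
    show "finite ?X" using SA_fin by auto
    show "\<sigma> ` ?X \<subseteq> ?X"
    proof
      fix T assume "T \<in> \<sigma> ` ?X"
      then obtain S where S: "S \<in> ?X" "T = \<sigma> S" by auto
      have "S \<in> SS \<nu>" using S by (auto simp: SA_def)
      hence "\<sigma> S \<in> SS \<nu>" by (rule SS_\<sigma>)
      moreover have "\<sigma> S \<in> SA \<nu>" using SA_mk[OF \<open>S \<in> SS \<nu>\<close> calculation] mk_\<sigma> S by auto
      moreover have "\<sigma> S \<notin> Full \<nu>" using Full_mk[of S "\<sigma> S"] calculation mk_\<sigma> S by auto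
      ultimately show "T \<in> ?X" using S mk_\<sigma> by auto
    qed
    show "inj_on \<sigma> ?X"
    proof (rule inj_onI)
      fix S1 S2 assume S: "S1 \<in> ?X" "S2 \<in> ?X" "\<sigma> S1 = \<sigma> S2"
      show "S1 = S2"
      proof
        fix l' show "S1 l' = S2 l'"
        proof (cases "l' = l")
          case False thus ?thesis using fun_cong[OF S(3), of l'] by (simp add: \<sigma>_def)
        next
          case True
          have a: "S1 l - G i = S2 l - G i"
          proof -
            have "\<sigma> S1 l - G i = \<sigma> S2 l - G i" using S(3) by simp
            thus ?thesis using rotsub by (auto simp: \<sigma>_def)
          qed
          have "rot i ` (S1 l \<inter> G i) = rot i ` (S2 l \<inter> G i)"
            using piece_i[of S1] piece_i[of S2] S(3) by simp
          hence b: "S1 l \<inter> G i = S2 l \<inter> G i"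
            using inj_on_image_eq_iff[OF rot_inj[of i], of "S1 l \<inter> G i" "S2 l \<inter> G i"] by auto
          show ?thesis using a b True by blast
        qed
      qed
    qed
    show "pw ?L (\<sigma> S) = zeta (len i) ^ m * pw ?L S" if S: "S \<in> ?X" for S
    proof -
      have SS: "S \<in> SS \<nu>" using S by (auto simp: SA_def)
      have finSl: "finite (S l)" using SS li(1) finite_subset by (auto simp: SS_def)
      have "(\<Prod>c\<in>\<sigma> S l. om c) = (\<Prod>c\<in>S l - G i. om c) * (\<Prod>c\<in>rot i ` (S l \<inter> G i). om c)"
        unfolding \<sigma>_def using finSl rotsub by (simp, subst prod.union_disjoint) auto
      also have "\<dots> = (\<Prod>c\<in>S l - G i. om c) * (zeta (len i) ^ m * (\<Prod>c\<in>S l \<inter> G i. om c))"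
        using prod_rot[of "S l \<inter> G i" i] cardX[OF S] by simp
      also have "\<dots> = zeta (len i) ^ m * (\<Prod>c\<in>S l. om c)"
      proof -
        have "(\<Prod>c\<in>S l. om c) = (\<Prod>c\<in>S l - G i. om c) * (\<Prod>c\<in>S l \<inter> G i. om c)"
          using finSl by (subst prod.union_disjoint[symmetric]) (auto intro: prod.cong)
        thus ?thesis by (simp add: algebra_simps)
      qed
      finally have hl: "(\<Prod>c\<in>\<sigma> S l. om c) = zeta (len i) ^ m * (\<Prod>c\<in>S l. om c)" .
      have "pw ?L (\<sigma> S) = (\<Prod>c\<in>\<sigma> S l. om c) * (\<Prod>l'\<in>{..<?L} - {l}. \<Prod>c\<in>\<sigma> S l'. om c)"
        unfolding pw_def using li(1) by (subst prod.remove[of _ l]) auto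
      also have "(\<Prod>l'\<in>{..<?L} - {l}. \<Prod>c\<in>\<sigma> S l'. om c) = (\<Prod>l'\<in>{..<?L} - {l}. \<Prod>c\<in>S l'. om c)"
        by (rule prod.cong) (auto simp: \<sigma>_def)
      also have "pw ?L S = (\<Prod>c\<in>S l. om c) * (\<Prod>l'\<in>{..<?L} - {l}. \<Prod>c\<in>S l'. om c)"
        unfolding pw_def using li(1) by (subst prod.remove[of _ l]) auto
      ultimately show ?thesis using hl by (simp add: algebra_simps)
    qed
    show "zeta (len i) ^ m \<noteq> 1"
    proof (rule zeta_pow_ne1[OF len_pos[OF li(2)]])
      show "\<not> len i dvd m" using m0 by (auto dest: dvd_imp_le)
    qed
  qed
qed

lemma Phi_e: "Phi (\<lambda>\<alpha>. real (e_coeff N \<nu> \<alpha>)) = of_nat (card (Full \<nu>)) * W0"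
proof -
  have FS: "Full \<nu> \<subseteq> SA \<nu>" by (auto simp: Full_def)
  have "(\<Sum>S\<in>SA \<nu>. pw (length \<nu>) S) = (\<Sum>S\<in>Full \<nu>. pw (length \<nu>) S) + (\<Sum>S\<in>SA \<nu> - Full \<nu>. pw (length \<nu>) S)"
    using SA_fin FS by (metis add.commute sum.subset_diff)
  also have "(\<Sum>S\<in>SA \<nu> - Full \<nu>. pw (length \<nu>) S) =
      (\<Sum>M\<in>mk ` (SA \<nu> - Full \<nu>). \<Sum>S\<in>{S\<in>SA \<nu> - Full \<nu>. mk S = M}. pw (length \<nu>) S)"
    using SA_fin by (intro sum.image_gen) auto
  also have "\<dots> = 0" using nonfull_fiber_zero by simp
  also have "(\<Sum>S\<in>Full \<nu>. pw (length \<nu>) S) = (\<Sum>S\<in>Full \<nu>. W0)" using full_pw by simp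
  finally show ?thesis using Phi_e1 by simp
qed

end


lemma length_le_sum_list: "\<forall>p\<in>set xs. (p::nat) > 0 \<Longrightarrow> length xs \<le> sum_list xs"
  by (induct xs) auto

lemma int_partitions_fin: "finite (int_partitions N)"
proof -
  have "int_partitions N \<subseteq> {xs. set xs \<subseteq> {..N} \<and> length xs \<le> N}"
    using length_le_sum_list member_le_sum_list by (fastforce simp: int_partitions_def)
  thus ?thesis by (rule finite_subset) (rule finite_lists_length_le, auto)
qed

lemma N_in_int_partitions: "N > 0 \<Longrightarrow> [N] \<in> int_partitions N"
  by (auto simp: int_partitions_def)

context layout begin

lemma Full_N_ne: "Full [N] \<noteq> {}"
proof -
  define S where "S = (\<lambda>l::nat. if l = 0 then {..<N} else {})"
  have "S \<in> Full [N]"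
    using card_G G_sub by (auto simp: Full_def SA_def SS_def S_def Int_absorb1)
  thus ?thesis by auto
qed

lemma W0_nz: "W0 \<noteq> 0" by (simp add: W0_def om_nz)

end

context lgraph begin

lemma Phi_X_c:
  assumes c: "\<forall>\<alpha>. (\<forall>j\<ge>N. \<alpha> j = 0) \<longrightarrow> real (X_coeff V E \<alpha>) = (\<Sum>\<nu>\<in>IP. c \<nu> * real (e_coeff N \<nu> \<alpha>))"
    and fin: "finite IP"
  shows "Phi (\<lambda>\<alpha>. real (X_coeff V E \<alpha>)) = of_real (\<Sum>\<nu>\<in>IP. c \<nu> * real (card (Full \<nu>))) * W0"
proof -
  have "Phi (\<lambda>\<alpha>. real (X_coeff V E \<alpha>)) = Phi (\<lambda>\<alpha>. \<Sum>\<nu>\<in>IP. c \<nu> * real (e_coeff N \<nu> \<alpha>))"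
    using c by (intro Phi_cong) (auto simp: A_def)
  also have "\<dots> = (\<Sum>\<nu>\<in>IP. of_real (c \<nu>) * Phi (\<lambda>\<alpha>. real (e_coeff N \<nu> \<alpha>)))"
    by (rule Phi_lin[OF fin])
  also have "\<dots> = of_real (\<Sum>\<nu>\<in>IP. c \<nu> * real (card (Full \<nu>))) * W0"
    by (simp add: Phi_e sum_distrib_right mult.assoc)
  finally show ?thesis .
qed

lemma Phi_X_zero:
  assumes none: "\<not> (\<exists>P. connected_partition V E P \<and> partition_type P = image_mset len (mset_set {..<k}))"
  shows "Phi (\<lambda>\<alpha>. real (X_coeff V E \<alpha>)) = 0"
proof -
  have "T F = 0" if "F \<in> Pow V'" for F
  proof (rule ccontr)
    assume "T F \<noteq> 0"
    from T_nonzero[OF _ this] that obtain \<kappa> where "\<kappa> \<in> KF F" "\<forall>v\<in>V. len (grp (\<kappa> v)) dvd card (comp F v)"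
      by auto
    from good_partition[OF _ this] that none show False by blast
  qed
  thus ?thesis using Phi_X by simp
qed

lemma single_group_T:
  assumes k1: "k = 1" and lenN: "len 0 = N" and ctr: "ctr \<in> V"
    and conn: "\<forall>u\<in>V. (adjF V')\<^sup>*\<^sup>* ctr u"
    and sep: "\<And>F w. F \<subseteq> V' \<Longrightarrow> w \<in> V' \<Longrightarrow> w \<notin> F \<Longrightarrow> ctr \<notin> comp F w"
  shows "Phi (\<lambda>\<alpha>. real (X_coeff V E \<alpha>)) = (-1) ^ card V' * of_nat N"
proof -
  have g0: "grp c = 0" if "c < N" for c using grp_lt[OF that] k1 by simp
  have finV': "finite V'" using V_fin V'_sub finite_subset by blast
  have TF: "T F = 0" if F: "F \<subseteq> V'" "F \<noteq> V'" for F
  proof (rule ccontr)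
    assume "T F \<noteq> 0"
    from T_nonzero[OF F(1) this] obtain \<kappa> where \<kappa>: "\<kappa> \<in> KF F" "\<forall>v\<in>V. len (grp (\<kappa> v)) dvd card (comp F v)"
      by auto
    obtain w where w: "w \<in> V'" "w \<notin> F" using F by auto
    have wV: "w \<in> V" using w V'_sub by auto
    have "\<kappa> w < N" using \<kappa>(1) wV by (auto simp: KF_def KA_def PiE_def)
    hence dv: "N dvd card (comp F w)" using \<kappa>(2) wV g0 lenN by auto
    have sub: "comp F w \<subseteq> V" using comp_sub[OF F(1) wV] .
    have "comp F w \<noteq> V" using sep[OF F(1) w] ctr by auto
    hence "card (comp F w) < N" using sub V_fin card_V by (metis psubsetI psubset_card_mono)
    moreover have "card (comp F w) > 0" using comp_self[of w F] finite_subset[OF sub V_fin] card_gt_0_iff by blast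
    ultimately show False using dv by (auto dest: dvd_imp_le)
  qed
  have const: "\<kappa> u = \<kappa> ctr" if "\<forall>w\<in>V'. \<kappa> (par w) = \<kappa> w" "u \<in> V" for \<kappa> u
    using comp_const[OF that(1)] conn that(2) by (auto simp: comp_def)
  have KFV: "KF V' = (\<lambda>c. restrict (\<lambda>_. c) V) ` {..<N}"
  proof
    show "KF V' \<subseteq> (\<lambda>c. restrict (\<lambda>_. c) V) ` {..<N}"
    proof
      fix \<kappa> assume \<kappa>: "\<kappa> \<in> KF V'"
      hence "\<kappa> \<in> V \<rightarrow>\<^sub>E {..<N}" "\<forall>w\<in>V'. \<kappa> (par w) = \<kappa> w" by (auto simp: KF_def KA_def)
      hence "\<kappa> = restrict (\<lambda>_. \<kappa> ctr) V" "\<kappa> ctr < N" using const ctr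
        by (auto simp: PiE_def extensional_def fun_eq_iff)
      thus "\<kappa> \<in> (\<lambda>c. restrict (\<lambda>_. c) V) ` {..<N}" by auto
    qed
    show "(\<lambda>c. restrict (\<lambda>_. c) V) ` {..<N} \<subseteq> KF V'"
    proof
      fix \<kappa> assume "\<kappa> \<in> (\<lambda>c. restrict (\<lambda>_. c) V) ` {..<N}"
      then obtain c where c: "c < N" "\<kappa> = restrict (\<lambda>_. c) V" by auto
      have "{v\<in>V. grp (\<kappa> v) = 0} = V" using c g0 by auto
      hence "\<forall>i<k. card {v\<in>V. grp (\<kappa> v) = i} = len i" using k1 lenN card_V by auto
      moreover have "\<forall>w\<in>V'. \<kappa> (par w) = \<kappa> w" using c par_in V'_sub by auto
      ultimately show "\<kappa> \<in> KF V'" using c by (auto simp: KF_def KA_def)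
    qed
  qed
  have "T V' = (\<Sum>c<N. \<Prod>v\<in>V. om (restrict (\<lambda>_. c) V v))"
    unfolding T_def KFV
    by (rule sum.reindex_cong[where l = "\<lambda>c. restrict (\<lambda>_. c) V"])
       (use ctr in \<open>auto simp: inj_on_def fun_eq_iff\<close>)
  also have "\<dots> = (\<Sum>c<N. 1)"
  proof (rule sum.cong[OF refl])
    fix c assume c: "c \<in> {..<N}"
    have "(\<Prod>v\<in>V. om (restrict (\<lambda>_. c) V v)) = om c ^ N" using card_V by simp
    also have "\<dots> = (zeta N ^ N) ^ pos c" using g0 c lenN by (simp add: om_def power_mult[symmetric] mult.commute)
    also have "\<dots> = 1" using zeta_pow_l[of N] ctr card_V V_fin card_gt_0_iff by fastforce
    finally show "(\<Prod>v\<in>V. om (restrict (\<lambda>_. c) V v)) = 1" .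
  qed
  finally have TV: "T V' = of_nat N" by simp
  have "Phi (\<lambda>\<alpha>. real (X_coeff V E \<alpha>)) = (\<Sum>F\<in>Pow V'. (-1) ^ card F * T F)" by (rule Phi_X)
  also have "\<dots> = (-1) ^ card V' * T V'"
    using finV' TF by (subst sum.remove[of _ V']) (auto intro!: sum.neutral)
  finally show ?thesis using TV by simp
qed

end


definition spar :: "nat \<times> nat \<Rightarrow> nat \<times> nat" where
  "spar w = (if snd w \<le> 1 then (0,0) else (fst w, snd w - 1))"

definition sadj where "sadj F u w \<longleftrightarrow> (w \<in> F \<and> u = spar w) \<or> (u \<in> F \<and> w = spar u)"

lemma sV_iff: "(x,y) \<in> spider_V lam d \<longleftrightarrow> (x,y) = (0,0) \<or> (1 \<le> x \<and> x \<le> d \<and> 1 \<le> y \<and> y \<le> lam x)"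
  by (auto simp: spider_V_def)

lemma sV_eq: "spider_V lam d = insert (0,0) (SIGMA x:{1..d}. {1..lam x})"
  by (auto simp: spider_V_def)

lemma sV_fin: "finite (spider_V lam d)" by (simp add: sV_eq)

lemma sV_card: "card (spider_V lam d) = 1 + (\<Sum>k=1..d. lam k)"
proof -
  have "(0,0) \<notin> (SIGMA x:{1..d}. {1..lam x})" by auto
  hence "card (spider_V lam d) = 1 + card (SIGMA x:{1..d}. {1..lam x})" by (simp add: sV_eq)
  also have "card (SIGMA x:{1..d}. {1..lam x}) = (\<Sum>k=1..d. lam k)" by (subst card_SigmaI) auto
  finally show ?thesis .
qed

lemma ctr_V: "(0,0) \<in> spider_V lam d" by (simp add: spider_V_def)

lemma spar_in: "w \<in> spider_V lam d - {(0,0)} \<Longrightarrow> spar w \<in> spider_V lam d"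
  by (cases w) (auto simp: spider_V_def spar_def)

lemma spar_E: "w \<in> spider_V lam d - {(0,0)} \<Longrightarrow>
   spider_E lam d (spar w) w \<and> spider_E lam d w (spar w)"
  using spar_in[of w lam d] by (cases w) (auto simp: spider_E_def spider_V_def spar_def)

lemma sE_cases: "spider_E lam d u v \<Longrightarrow>
   (v \<in> spider_V lam d - {(0,0)} \<and> u = spar v) \<or> (u \<in> spider_V lam d - {(0,0)} \<and> v = spar u)"
  by (cases u; cases v) (auto simp: spider_E_def spider_V_def spar_def)

lemma s_proper_iff: "proper_colouring (spider_V lam d) (spider_E lam d) \<kappa> \<longleftrightarrow>
   (\<forall>w\<in>spider_V lam d - {(0,0)}. \<kappa> (spar w) \<noteq> \<kappa> w)"
proof
  assume p: "proper_colouring (spider_V lam d) (spider_E lam d) \<kappa>"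
  show "\<forall>w\<in>spider_V lam d - {(0,0)}. \<kappa> (spar w) \<noteq> \<kappa> w"
    using p spar_E spar_in unfolding proper_colouring_def by blast
next
  assume h: "\<forall>w\<in>spider_V lam d - {(0,0)}. \<kappa> (spar w) \<noteq> \<kappa> w"
  show "proper_colouring (spider_V lam d) (spider_E lam d) \<kappa>"
    unfolding proper_colouring_def
  proof (intro ballI impI)
    fix u v assume "spider_E lam d u v"
    from sE_cases[OF this] show "\<kappa> u \<noteq> \<kappa> v" using h by metis
  qed
qed

lemma s_conn: assumes "u \<in> spider_V lam d"
  shows "(sadj (spider_V lam d - {(0,0)}))\<^sup>*\<^sup>* (0,0) u"
proof -
  let ?V' = "spider_V lam d - {(0,0)}"
  have "(sadj ?V')\<^sup>*\<^sup>* (0,0) (x,y)" if "1 \<le> x" "x \<le> d" "1 \<le> y" "y \<le> lam x" for x y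
    using that
  proof (induct y)
    case 0 thus ?case by simp
  next
    case (Suc y)
    show ?case
    proof (cases "y = 0")
      case True
      hence "sadj ?V' (0,0) (x, Suc y)" using Suc.prems by (auto simp: sadj_def spar_def spider_V_def)
      thus ?thesis by auto
    next
      case False
      hence "(sadj ?V')\<^sup>*\<^sup>* (0,0) (x,y)" using Suc by auto
      moreover have "sadj ?V' (x,y) (x, Suc y)" using Suc.prems False by (auto simp: sadj_def spar_def spider_V_def)
      ultimately show ?thesis by (rule rtranclp.rtrancl_into_rtrancl)
    qed
  qed
  thus ?thesis using assms by (cases u) (auto simp: spider_V_def)
qed

lemma s_sep:
  assumes F: "F \<subseteq> spider_V lam d - {(0,0)}" and w: "w \<in> spider_V lam d - {(0,0)}" "w \<notin> F"
    and r: "(sadj F)\<^sup>*\<^sup>* w u"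
  shows "u \<noteq> (0,0)"
proof -
  obtain kw jw where wdef: "w = (kw, jw)" by (cases w)
  have kw: "kw \<ge> 1" "jw \<ge> 1" using w by (auto simp: wdef spider_V_def)
  have "fst u = kw \<and> snd u \<ge> jw" using r
  proof (induct rule: rtranclp_induct)
    case base thus ?case by (simp add: wdef)
  next
    case (step y z)
    obtain ky jy where y: "y = (ky, jy)" by (cases y)
    obtain kz jz where z: "z = (kz, jz)" by (cases z)
    have yD: "ky = kw" "jy \<ge> jw" using step(3) by (auto simp: y)
    from step(2) show ?case
      unfolding sadj_def
    proof
      assume a: "z \<in> F \<and> y = spar z"
      show ?thesis
      proof (cases "jz \<le> 1")
        case True thus ?thesis using a yD kw by (auto simp: spar_def y z)
      next
        case False thus ?thesis using a yD by (auto simp: spar_def y z)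
      qed
    next
      assume a: "y \<in> F \<and> z = spar y"
      have "y \<noteq> w" using a w(2) by auto
      hence "jy > jw" using yD by (auto simp: y wdef)
      thus ?thesis using a yD kw by (auto simp: spar_def y z)
    qed
  qed
  thus ?thesis using kw by auto
qed


context layout begin
lemma Full_single_empty:
  assumes k1: "k = 1" and lenN: "len 0 = N" and \<nu>: "\<nu> \<in> int_partitions N" "\<nu> \<noteq> [N]"
  shows "Full \<nu> = {}"
proof (rule ccontr)
  assume "Full \<nu> \<noteq> {}"
  then obtain S where S: "S \<in> Full \<nu>" by auto
  have Npos: "N > 0" using len_pos[of 0] k1 lenN by simp
  have G0: "G 0 = {..<N}" using grp_lt k1 by (auto simp: G_def)
  have all: "\<nu> ! l = N" if l: "l < length \<nu>" for l
  proof -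
    have sub: "S l \<subseteq> {..<N}" and cS: "card (S l) = \<nu> ! l" using S l by (auto simp: Full_def SA_def SS_def)
    have "\<forall>i<k. card (S l \<inter> G i) = 0 \<or> card (S l \<inter> G i) = len i" using S l by (simp add: Full_def)
    hence "card (S l \<inter> G 0) = 0 \<or> card (S l \<inter> G 0) = len 0" using k1 by simp
    moreover have "S l \<inter> G 0 = S l" using sub G0 by blast
    moreover have "\<nu> ! l > 0" using \<nu>(1) l by (auto simp: int_partitions_def)
    ultimately show ?thesis using cS lenN by auto
  qed
  hence rep: "\<nu> = replicate (length \<nu>) N" by (simp add: list_eq_iff_nth_eq)
  have "sum_list \<nu> = N" using \<nu>(1) by (simp add: int_partitions_def)
  moreover have "sum_list (replicate (length \<nu>) N) = length \<nu> * N" by (simp add: sum_list_replicate)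
  ultimately have "length \<nu> * N = N" using rep by metis
  hence "length \<nu> = 1" using Npos by simp
  hence "\<nu> = [N]" using rep by (simp add: replicate_Suc)
  thus False using \<nu>(2) by simp
qed
end

lemma spider_not_epos:
  fixes lam :: "nat \<Rightarrow> nat" and d q :: nat and len :: "nat \<Rightarrow> nat"
  defines "V \<equiv> spider_V lam d" and "E \<equiv> spider_E lam d"
  assumes lp: "\<And>i. i < q \<Longrightarrow> len i > 0" and ls: "(\<Sum>i<q. len i) = card V"
    and none: "\<not> (\<exists>P. connected_partition V E P \<and> partition_type P = image_mset len (mset_set {..<q}))"
  shows "\<not> e_positive V E"
proof
  assume "e_positive V E"
  then obtain c where c0: "\<forall>\<nu>\<in>int_partitions (card V). c \<nu> \<ge> 0"
    and cX: "\<forall>\<alpha>. (\<forall>j\<ge>card V. \<alpha> j = 0) \<longrightarrow>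
        real (X_coeff V E \<alpha>) = (\<Sum>\<nu>\<in>int_partitions (card V). c \<nu> * real (e_coeff (card V) \<nu> \<alpha>))"
    unfolding e_positive_def by blast
  define N where "N = card V"
  define IP where "IP = int_partitions N"
  have Npos: "N > 0" using ctr_V[of lam d] sV_fin[of lam d] unfolding N_def V_def card_gt_0_iff by blast
  have finIP: "finite IP" by (simp add: IP_def int_partitions_fin)
  have NIP: "[N] \<in> IP" using Npos by (simp add: IP_def N_in_int_partitions)
  have cX': "\<forall>\<alpha>. (\<forall>j\<ge>N. \<alpha> j = 0) \<longrightarrow> real (X_coeff V E \<alpha>) = (\<Sum>\<nu>\<in>IP. c \<nu> * real (e_coeff N \<nu> \<alpha>))"
    using cX by (simp add: N_def IP_def)
  have c0': "\<forall>\<nu>\<in>IP. c \<nu> \<ge> 0" using c0 by (simp add: N_def IP_def)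
  have gr: "lgraph_axioms N V (V - {(0,0)}) spar E"
    unfolding lgraph_axioms_def
    using sV_fin spar_in spar_E s_proper_iff by (auto simp: V_def E_def N_def)
  obtain f1 where f1: "bij_betw f1 {..<N} (SIGMA i:{..<q}. {..<len i})"
    using layout_exists[where k=q and N=N and len=len] ls by (auto simp: N_def)
  interpret L1: lgraph N q len f1 V "V - {(0,0)}" spar E
    by (intro lgraph.intro layout.intro gr) (use f1 lp in auto)
  have "L1.Phi (\<lambda>\<alpha>. real (X_coeff V E \<alpha>)) = 0" by (rule L1.Phi_X_zero[OF none])
  hence "of_real (\<Sum>\<nu>\<in>IP. c \<nu> * real (card (L1.Full \<nu>))) * L1.W0 = 0"
    using L1.Phi_X_c[OF cX' finIP] by simp
  hence "(\<Sum>\<nu>\<in>IP. c \<nu> * real (card (L1.Full \<nu>))) = 0"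
    using L1.W0_nz by (metis mult_eq_0_iff of_real_eq_0_iff)
  hence "\<forall>\<nu>\<in>IP. c \<nu> * real (card (L1.Full \<nu>)) = 0"
    using sum_nonneg_eq_0_iff[OF finIP, of "\<lambda>\<nu>. c \<nu> * real (card (L1.Full \<nu>))"] c0' by simp
  hence "c [N] * real (card (L1.Full [N])) = 0" using NIP by blast
  moreover have "card (L1.Full [N]) > 0"
  proof -
    have "L1.Full [N] \<subseteq> L1.SA [N]" by (auto simp: L1.Full_def)
    hence "finite (L1.Full [N])" using L1.SA_fin by (rule finite_subset)
    thus ?thesis using L1.Full_N_ne by (simp add: card_gt_0_iff)
  qed
  ultimately have cN: "c [N] = 0" by simp
  have f2: "bij_betw (\<lambda>c. (0::nat, c)) {..<N} (SIGMA i:{..<1::nat}. {..<(\<lambda>_. N) i})"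
    by (auto simp: bij_betw_def inj_on_def)
  interpret L2: lgraph N 1 "\<lambda>_. N" "\<lambda>c. (0::nat, c)" V "V - {(0,0)}" spar E
    by (intro lgraph.intro layout.intro gr f2) (use Npos in auto)
  have adj: "L2.adjF F = sadj F" for F by (auto simp: L2.adjF_def sadj_def fun_eq_iff)
  have "L2.Phi (\<lambda>\<alpha>. real (X_coeff V E \<alpha>)) = (-1) ^ card (V - {(0,0)}) * of_nat N"
  proof (rule L2.single_group_T[where ctr = "(0,0)"])
    show "(0,0) \<in> V" by (simp add: V_def ctr_V)
    show "\<forall>u\<in>V. (L2.adjF (V - {(0,0)}))\<^sup>*\<^sup>* (0, 0) u" using s_conn by (simp add: adj V_def)
    fix F w assume "F \<subseteq> V - {(0,0)}" "w \<in> V - {(0,0)}" "w \<notin> F"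
    thus "(0,0) \<notin> L2.comp F w" using s_sep[of F lam d w] by (auto simp: L2.comp_def adj V_def)
  qed simp_all
  moreover have "L2.Phi (\<lambda>\<alpha>. real (X_coeff V E \<alpha>)) = of_real (\<Sum>\<nu>\<in>IP. c \<nu> * real (card (L2.Full \<nu>))) * L2.W0"
    using L2.Phi_X_c[OF cX' finIP] .
  moreover have "(\<Sum>\<nu>\<in>IP. c \<nu> * real (card (L2.Full \<nu>))) = 0"
  proof (rule sum.neutral, intro ballI)
    fix \<nu> assume "\<nu> \<in> IP"
    show "c \<nu> * real (card (L2.Full \<nu>)) = 0"
    proof (cases "\<nu> = [N]")
      case True thus ?thesis using cN by simp
    next
      case False thus ?thesis using L2.Full_single_empty[OF refl refl, of \<nu>] \<open>\<nu> \<in> IP\<close> by (simp add: IP_def)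
    qed
  qed
  ultimately have "(-1) ^ card (V - {(0,0)}) * (of_nat N :: complex) = 0" by (metis of_real_0 mult_zero_left)
  thus False using Npos by simp
qed


lemma arith1:
  fixes Cc b t Li lam R kq a d' m :: nat
  assumes "Cc \<le> b+1" "1+t+Li \<le> Cc" "lam = Li + R" "kq*b \<le> R" "R \<le> kq*(b+1)" "b = a + d'"
    "lam + 1 \<le> m*a" "m*a \<le> lam + m" "m*d' + 2*m \<le> t" "m > 0"
  shows False
proof -
  have mb: "m*b = m*a + m*d'" using assms(6) by (simp add: algebra_simps)
  have "kq < m"
  proof (rule ccontr)
    assume "\<not> kq < m"
    hence "m*b \<le> kq*b" by (simp add: mult_right_mono)
    thus False using assms mb by linarith
  qed
  hence "kq*(b+1) \<le> (m-1)*(b+1)" by (intro mult_right_mono) auto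
  moreover have "(m-1)*(b+1) + (b+1) = m*b + m" using assms(10)
    by (cases m) (auto simp: algebra_simps)
  ultimately show False using assms mb by linarith
qed

definition leg :: "(nat \<Rightarrow> nat) \<Rightarrow> nat \<Rightarrow> (nat \<times> nat) set" where
  "leg lam k = {k} \<times> {1..lam k}"

lemma card_leg: "card (leg lam k) = lam k" by (simp add: leg_def)

lemma block_in_leg:
  assumes P: "connected_partition (spider_V lam d) (spider_E lam d) P" and B: "B \<in> P" "(0,0) \<notin> B"
  shows "\<exists>k. 1 \<le> k \<and> k \<le> d \<and> B \<subseteq> leg lam k"
proof -
  have BV: "B \<subseteq> spider_V lam d" using P B by (auto simp: connected_partition_def)
  have cB: "connected_on (spider_E lam d) B" using P B by (auto simp: connected_partition_def)
  then obtain x where x: "x \<in> B" by (auto simp: connected_on_def)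
  obtain k j where xkj: "x = (k,j)" by (cases x)
  have k: "1 \<le> k" "k \<le> d" using BV x B(2) by (auto simp: xkj spider_V_def)
  have "fst y = k" if y: "y \<in> B" for y
  proof -
    have "(\<lambda>u v. u \<in> B \<and> v \<in> B \<and> spider_E lam d u v)\<^sup>*\<^sup>* x y" using cB x y by (auto simp: connected_on_def)
    thus ?thesis
    proof (induct rule: rtranclp_induct)
      case base thus ?case by (simp add: xkj)
    next
      case (step u v)
      hence "u \<noteq> (0,0)" "v \<noteq> (0,0)" "spider_E lam d u v" using B(2) by auto
      thus ?case using step(3) by (cases u; cases v) (auto simp: spider_E_def)
    qed
  qed
  hence "B \<subseteq> leg lam k" using BV B(2) by (force simp: leg_def spider_V_def)
  thus ?thesis using k by auto
qed

lemma lam_mono: fixes j k :: nat and lam :: "nat \<Rightarrow> nat" assumes mono: "\<forall>k. 1 \<le> k \<and> k < d \<longrightarrow> lam (k + 1) \<le> lam k"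
  shows "1 \<le> j \<Longrightarrow> j \<le> k \<Longrightarrow> k \<le> d \<Longrightarrow> lam k \<le> lam j"
proof (induct k)
  case 0 thus ?case by simp
next
  case (Suc k)
  show ?case
  proof (cases "j = Suc k")
    case True thus ?thesis by simp
  next
    case False
    hence "lam k \<le> lam j" using Suc by auto
    moreover have "lam (k+1) \<le> lam k" using mono Suc.prems False by auto
    ultimately show ?thesis by simp
  qed
qed

lemma no_partition:
  fixes lam :: "nat \<Rightarrow> nat" and d i m b :: nat
  defines "V \<equiv> spider_V lam d" and "E \<equiv> spider_E lam d"
  assumes mono: "\<forall>k. 1 \<le> k \<and> k < d \<longrightarrow> lam (k + 1) \<le> lam k"
    and i: "1 \<le> i" "i < d" and m: "m > 0"
    and b: "b = a + d'"
    and ab: "lam (i+1) < a"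
    and lamA: "lam i + 1 \<le> m*a" "m*a \<le> lam i + m"
    and tA: "m*d' + 2*m \<le> (\<Sum>k=i+1..d. lam k)"
    and P: "connected_partition V E P"
    and sizes: "\<And>B. B \<in> P \<Longrightarrow> card B = b \<or> card B = b+1"
  shows False
proof -
  define t where "t = (\<Sum>k=i+1..d. lam k)"
  have finV: "finite V" by (simp add: V_def sV_fin)
  have UP: "\<Union>P = V" and disj: "\<And>B C. B \<in> P \<Longrightarrow> C \<in> P \<Longrightarrow> B \<noteq> C \<Longrightarrow> B \<inter> C = {}"
    using P by (auto simp: connected_partition_def)
  have finB: "finite B" if "B \<in> P" for B using UP that finV by (meson Sup_upper finite_subset)
  have finP: "finite P" using UP finV by (simp add: finite_UnionD)
  obtain C where C: "C \<in> P" "(0,0) \<in> C" using UP ctr_V[of lam d] by (auto simp: V_def)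
  have other: "\<exists>k. 1 \<le> k \<and> k \<le> d \<and> B \<subseteq> leg lam k" if "B \<in> P" "B \<noteq> C" for B
  proof -
    have "(0,0) \<notin> B" using disj[OF that(1) C(1) that(2)] C(2) by auto
    thus ?thesis using block_in_leg[OF P[unfolded V_def E_def] that(1)] by auto
  qed
  have legV: "leg lam k \<subseteq> V" if "1 \<le> k" "k \<le> d" for k using that by (auto simp: leg_def V_def spider_V_def)
  have in_block: "\<exists>B\<in>P. v \<in> B" if "v \<in> V" for v using UP that by auto
  have whom: "B \<subseteq> leg lam k" if h: "B \<in> P" "B \<noteq> C" "v \<in> B" "v \<in> leg lam k" for B v k
  proof -
    obtain k' where "1 \<le> k'" "k' \<le> d" "B \<subseteq> leg lam k'" using other h(1,2) by blast
    moreover hence "k' = k" using h(3,4) by (auto simp: leg_def)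
    ultimately show ?thesis by simp
  qed
  have ab': "a \<le> b" using b by simp
  have shortC: "leg lam k \<subseteq> C" if k: "i < k" "k \<le> d" for k
  proof
    fix v assume v: "v \<in> leg lam k"
    have "v \<in> V" using legV[of k] k v i by auto
    then obtain B where B: "B \<in> P" "v \<in> B" using in_block by blast
    show "v \<in> C"
    proof (rule ccontr)
      assume "v \<notin> C"
      hence "B \<noteq> C" using B by auto
      hence "B \<subseteq> leg lam k" using whom B v by blast
      hence "card B \<le> lam k" using card_mono[of "leg lam k" B] card_leg by (simp add: leg_def)
      moreover have "lam k \<le> lam (i+1)" using lam_mono[OF mono, of "i+1" k] k by simp
      moreover have "card B \<ge> b" using sizes[OF B(1)] by auto
      ultimately show False using ab ab' by simp
    qed
  qed
  define Lt where "Lt = (SIGMA k:{i+1..d}. {1..lam k})"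
  have cLt: "card Lt = t" unfolding Lt_def t_def by (subst card_SigmaI) auto
  have LtC: "Lt \<subseteq> C"
  proof
    fix x assume "x \<in> Lt"
    then obtain k j where x: "x = (k,j)" "i+1 \<le> k" "k \<le> d" "1 \<le> j" "j \<le> lam k" by (auto simp: Lt_def)
    hence "x \<in> leg lam k" by (auto simp: leg_def)
    thus "x \<in> C" using shortC[of k] x by auto
  qed
  define Li where "Li = leg lam i \<inter> C"
  define R where "R = leg lam i - C"
  have finLeg: "finite (leg lam i)" by (simp add: leg_def)
  have cLi: "lam i = card Li + card R"
    using card_Int_Diff[OF finLeg, of C] card_leg by (simp add: Li_def R_def)
  have cC: "1 + t + card Li \<le> card C"
  proof -
    have sub: "insert (0,0) (Lt \<union> Li) \<subseteq> C" using LtC C(2) by (auto simp: Li_def)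
    have d1: "Lt \<inter> Li = {}" by (auto simp: Lt_def Li_def leg_def)
    have n0: "(0,0) \<notin> Lt \<union> Li" by (auto simp: Lt_def Li_def leg_def)
    have finLt: "finite Lt" by (simp add: Lt_def)
    have finLi: "finite Li" using finLeg by (simp add: Li_def)
    have "card (insert (0,0) (Lt \<union> Li)) = 1 + t + card Li"
      using n0 d1 finLt finLi cLt by (simp add: card_Un_disjoint)
    thus ?thesis using card_mono[OF finB[OF C(1)] sub] by simp
  qed
  define Q where "Q = {B\<in>P. B \<noteq> C \<and> B \<subseteq> leg lam i}"
  have finQ: "finite Q" using finP by (simp add: Q_def)
  have RQ: "R = \<Union>Q"
  proof
    show "R \<subseteq> \<Union>Q"
    proof
      fix v assume v: "v \<in> R"
      have "v \<in> V" using v legV[of i] i by (auto simp: R_def)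
      then obtain B where B: "B \<in> P" "v \<in> B" using in_block by blast
      have "B \<noteq> C" using v B by (auto simp: R_def)
      hence "B \<subseteq> leg lam i" using whom B v by (auto simp: R_def)
      thus "v \<in> \<Union>Q" using B \<open>B \<noteq> C\<close> by (auto simp: Q_def)
    qed
    show "\<Union>Q \<subseteq> R" using disj C(1) by (auto simp: Q_def R_def)
  qed
  have cR: "card R = (\<Sum>B\<in>Q. card B)"
    unfolding RQ
    by (rule card_Union_disjoint) (use finQ disj finB in \<open>auto simp: Q_def pairwise_def disjnt_def\<close>)
  have lo: "card Q * b \<le> card R" unfolding cR using sum_bounded_below[of Q b card] sizes by (force simp: Q_def)
  have hi: "card R \<le> card Q * (b+1)" unfolding cR using sum_bounded_above[of Q card "b+1"] sizes by (force simp: Q_def)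
  have Cb: "card C \<le> b + 1" using sizes[OF C(1)] by auto
  show False
    using arith1[OF Cb cC cLi lo hi b lamA tA[folded t_def] m] .
qed


theorem theorem3p6:
  fixes lam :: "nat \<Rightarrow> nat" and d i m :: nat
  assumes pos: "\<forall>k\<in>{1..d}. lam k > 0"
    and mono: "\<forall>k. 1 \<le> k \<and> k < d \<longrightarrow> lam (k + 1) \<le> lam k"
    and i: "2 \<le> i" "i < d"
    and m: "m > 0"
  defines "n \<equiv> 1 + (\<Sum>k=1..d. lam k)"
    and "a \<equiv> nat \<lceil>real (lam i + 1) / real m\<rceil>"
  defines "q \<equiv> n div a" and "r \<equiv> n mod a"
  defines "d' \<equiv> r div q" and "r' \<equiv> r mod q"
    and "t \<equiv> (\<Sum>k=i+1..d. lam k)"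
  assumes t: "t > 2 * m - 1"
    and a: "a > lam (i + 1)"
    and q: "real q > real m * (real a - 1) / (real t - 2 * real m + 1)"
  shows "\<not> (\<exists>P. connected_partition (spider_V lam d) (spider_E lam d) P \<and>
              partition_type P = replicate_mset r' (a + d' + 1) + replicate_mset (q - r') (a + d'))
         \<and> \<not> e_positive (spider_V lam d) (spider_E lam d)"
proof -
  define x where "x = real (lam i + 1) / real m"
  have xpos: "x > 0" using m by (simp add: x_def)
  have ceil: "real a = of_int \<lceil>x\<rceil>" using xpos by (simp add: a_def x_def)
  have a1: "real a \<ge> x" "real a < x + 1" using ceil by linarith+
  have mx: "real m * x = real (lam i + 1)" using m by (simp add: x_def)
  have "real m * x \<le> real m * real a" using a1(1) m by (intro mult_left_mono) auto
  hence lamA1: "lam i + 1 \<le> m * a" using mx by (simp flip: of_nat_mult)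
  have "real m * real a < real m * (x + 1)" using a1(2) m by (intro mult_strict_left_mono) auto
  hence "real (m * a) < real (lam i + 1 + m)" using mx by (simp add: algebra_simps)
  hence "m * a < lam i + 1 + m" by (simp only: of_nat_less_iff)
  hence lamA2: "m * a \<le> lam i + m" by simp
  have apos: "a > 0" using lamA1 by (cases a) auto
  have t2: "t \<ge> 2 * m" using t m by simp
  define Y where "Y = real t - 2 * real m + 1"
  have Ypos: "Y > 0" using t2 by (simp add: Y_def)
  have qY: "real q * Y > real m * (real a - 1)" using q Ypos by (simp add: Y_def pos_divide_less_eq)
  have "real m * (real a - 1) \<ge> 0" using apos by simp
  hence "real q * Y > 0" using qY by linarith
  hence qpos: "q > 0" using Ypos by (simp add: zero_less_mult_iff)
  have "r < a" using apos by (simp add: r_def)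
  moreover have "q * d' \<le> r" by (simp add: d'_def)
  ultimately have "real q * real d' \<le> real a - 1" by (simp flip: of_nat_mult)
  hence "real m * (real q * real d') \<le> real m * (real a - 1)" by (intro mult_left_mono) auto
  hence "real q * (real m * real d') < real q * Y" using qY by (simp add: algebra_simps)
  hence "real m * real d' < Y" using qpos by simp
  hence "real (m * d' + 2 * m) < real (t + 1)" by (simp add: Y_def)
  hence "m * d' + 2 * m < t + 1" by (simp only: of_nat_less_iff)
  hence tA: "m * d' + 2 * m \<le> t" by simp
  define b where "b = a + d'"
  let ?T = "replicate_mset r' (a + d' + 1) + replicate_mset (q - r') (a + d')"
  have part1: "\<not> (\<exists>P. connected_partition (spider_V lam d) (spider_E lam d) P \<and> partition_type P = ?T)"
  proof
    assume "\<exists>P. connected_partition (spider_V lam d) (spider_E lam d) P \<and> partition_type P = ?T"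
    then obtain P where P: "connected_partition (spider_V lam d) (spider_E lam d) P" "partition_type P = ?T" by blast
    have finP: "finite P" using P(1) sV_fin[of lam d] by (auto simp: connected_partition_def finite_UnionD)
    have sizes: "card B = b \<or> card B = b + 1" if "B \<in> P" for B
    proof -
      have "card B \<in># partition_type P" using that finP by (simp add: partition_type_def)
      hence "card B \<in># ?T" using P(2) by simp
      thus ?thesis by (auto simp: b_def split: if_splits)
    qed
    show False
      using no_partition[OF mono _ i(2) m b_def a lamA1 lamA2 tA[unfolded t_def] P(1) sizes] i(1) by simp
  qed
  define len where "len j = (if j < r' then a + d' + 1 else a + d')" for j
  have rq: "r' < q" using qpos by (simp add: r'_def)
  have "(\<Sum>j<q. len j) = (\<Sum>j<q. (a + d') + (if j < r' then 1 else 0))"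
    by (intro sum.cong) (auto simp: len_def)
  also have "\<dots> = q * (a + d') + (\<Sum>j<q. if j < r' then 1 else 0)"
    by (simp add: sum.distrib)
  also have "(\<Sum>j<q. if j < r' then 1 else (0::nat)) = card ({..<q} \<inter> {j. j < r'})"
    by (simp add: sum.If_cases)
  also have "{..<q} \<inter> {j. j < r'} = {..<r'}" using rq by auto
  also have "q * (a + d') + card {..<r'} = q * a + r" by (simp add: algebra_simps d'_def r'_def)
  also have "q * a + r = n" by (simp add: q_def r_def mult.commute)
  finally have lsum: "(\<Sum>j<q. len j) = card (spider_V lam d)" by (simp add: sV_card n_def)
  have img: "image_mset len (mset_set {..<q}) = ?T"
  proof -
    have "{..<q} = {..<r'} \<union> {r'..<q}" using rq by auto
    hence "mset_set {..<q} = mset_set {..<r'} + mset_set {r'..<q}"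
      using mset_set_Union[of "{..<r'}" "{r'..<q}"] by (simp add: ivl_disj_int)
    moreover have "image_mset len (mset_set {..<r'}) = replicate_mset r' (a + d' + 1)"
    proof -
      have "image_mset len (mset_set {..<r'}) = image_mset (\<lambda>_. a + d' + 1) (mset_set {..<r'})"
        by (rule image_mset_cong) (simp add: len_def)
      also have "\<dots> = replicate_mset r' (a + d' + 1)" by (simp only: image_mset_const_eq) simp
      finally show ?thesis .
    qed
    moreover have "image_mset len (mset_set {r'..<q}) = replicate_mset (q - r') (a + d')"
    proof -
      have "image_mset len (mset_set {r'..<q}) = image_mset (\<lambda>_. a + d') (mset_set {r'..<q})"
        by (rule image_mset_cong) (simp add: len_def)
      also have "\<dots> = replicate_mset (q - r') (a + d')" by (simp only: image_mset_const_eq) simp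
      finally show ?thesis .
    qed
    ultimately show ?thesis by (simp only: image_mset_union)
  qed
  have part2: "\<not> e_positive (spider_V lam d) (spider_E lam d)"
  proof (rule spider_not_epos)
    show "\<And>j. j < q \<Longrightarrow> len j > 0" using apos by (simp add: len_def)
    show "(\<Sum>j<q. len j) = card (spider_V lam d)" by (rule lsum)
    show "\<not> (\<exists>P. connected_partition (spider_V lam d) (spider_E lam d) P \<and> partition_type P = image_mset len (mset_set {..<q}))"
      unfolding img by (rule part1)
  qed
  show ?thesis using part1 part2 by blast
qed


end
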